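(* Let $\mathbf J=(\mathcal A^+,\mathcal A^-,\mathcal B^+,\mathcal B^-,\Gamma^+,\Gamma^-)$ arise as the limit of a sequence of extreme character parameters $\omega(N)$ as in the hypotheses below, and let $\mathbf F=\mathbf F_{\mathbf J}$ be the function defined below (extended to $1+\mathbb H$ by the same formula). Then for every $y\in\mathbb R$ and $\eta>0$ the equation $$\frac1z+1+\frac{(1+z)\mathbf F(1+z)}{\eta}=\frac y\eta$$ has at most one root $z$ in the upper half-plane $\mathbb H=\{\Im z>0\}$. Let $\mathbf D_{\mathbf F}\subset\mathbb R^2$ be the set of pairs $(y,\eta)$ for which such a root exists. Then the map sending $(y,\eta)\in\mathbf D_{\mathbf F}$ to this root is a diffeomorphism from $\mathbf D_{\mathbf F}$ onto $\mathbb H$.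
   Context: Hypotheses: for each $N$, $\omega(N)=(\alpha^\pm(N),\beta^\pm(N),\gamma^\pm(N))$ with $\alpha^\pm_1\ge\alpha^\pm_2\ge\dots\ge0$, $\beta^\pm_1\ge\dots\ge0$, $\gamma^\pm\ge0$, $\beta^+_1+\beta^-_1\le1$; only finitely many parameters are nonzero, the $\alpha^\pm_i(N)$ are uniformly bounded, and $\frac1N\sum_{i:\alpha_i^\pm(N)>0}\delta(\alpha_i^\pm(N))\to\mathcal A^\pm$, $\frac1N\sum_{i:\beta_i^\pm(N)>0}\delta(\beta_i^\pm(N))\to\mathcal B^\pm$ weakly (finite compactly supported limit measures), and $\gamma^\pm(N)/N\to\Gamma^\pm>0$. With $C_\mu(z)=\int\frac{d\mu(x)}{z-x}$, $\mathbf F_{\mathbf J}(1+t)=\frac{C_{\mathcal A^+}(1/t)}{t^2}-\frac{\mathcal A^+(\mathbb R)}t+\frac{C_{\mathcal B^+}(-1/t)}{t^2}+\frac{\mathcal B^+(\mathbb R)}t-\frac{C_{\mathcal A^-}(-\frac{1+t}t)}{t^2}-\frac{\mathcal A^-(\mathbb R)}{t(1+t)}-\frac{C_{\mathcal B^-}(\frac{1+t}t)}{t^2}+\frac{\mathcal B^-(\mathbb R)}{t(1+t)}+\Gamma^+-\frac{\Gamma^-}{(1+t)^2}$. *)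

theory Defs
  imports "HOL-Analysis.Analysis"
begin

text \<open>Extreme character parameters omega(N) for a fixed N.  Sequences are indexed from 0,
  so a 0 is alpha_1 of the paper, etc.\<close>
definition extreme_char_params ::
  "(nat \<Rightarrow> real) \<Rightarrow> (nat \<Rightarrow> real) \<Rightarrow> (nat \<Rightarrow> real) \<Rightarrow> (nat \<Rightarrow> real) \<Rightarrow> real \<Rightarrow> real \<Rightarrow> bool" where
  "extreme_char_params ap am bp bm gp gm \<longleftrightarrow>
     (\<forall>i. ap i \<ge> ap (Suc i) \<and> am i \<ge> am (Suc i) \<and> bp i \<ge> bp (Suc i) \<and> bm i \<ge> bm (Suc i)) \<and>
     (\<forall>i. ap i \<ge> 0 \<and> am i \<ge> 0 \<and> bp i \<ge> 0 \<and> bm i \<ge> 0) \<and>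
     gp \<ge> 0 \<and> gm \<ge> 0 \<and> bp 0 + bm 0 \<le> 1 \<and>
     finite {i. ap i \<noteq> 0} \<and> finite {i. am i \<noteq> 0} \<and>
     finite {i. bp i \<noteq> 0} \<and> finite {i. bm i \<noteq> 0}"

definition fin_cpt_measure :: "real measure \<Rightarrow> bool" where
  "fin_cpt_measure \<mu> \<longleftrightarrow> sets \<mu> = sets borel \<and> finite_measure \<mu> \<and>
     (\<exists>K. compact K \<and> emeasure \<mu> (UNIV - K) = 0)"

definition empirical_weak_conv :: "(nat \<Rightarrow> nat \<Rightarrow> real) \<Rightarrow> real measure \<Rightarrow> bool" where
  "empirical_weak_conv a \<mu> \<longleftrightarrow>
     (\<forall>f::real \<Rightarrow> real. continuous_on UNIV f \<and> bounded (range f) \<longrightarrow>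
        ((\<lambda>N. (\<Sum>i\<in>{i. a N i > 0}. f (a N i)) / real N) \<longlongrightarrow> integral\<^sup>L \<mu> f) sequentially)"

definition cauchy_transform :: "real measure \<Rightarrow> complex \<Rightarrow> complex" where
  "cauchy_transform \<mu> z = integral\<^sup>L \<mu> (\<lambda>x. 1 / (z - complex_of_real x))"

definition total_mass :: "real measure \<Rightarrow> complex" where
  "total_mass \<mu> = complex_of_real (measure \<mu> UNIV)"

text \<open>F_shift ... t = F_J(1 + t), the formula of the paper.\<close>
definition F_shift ::
  "real measure \<Rightarrow> real measure \<Rightarrow> real measure \<Rightarrow> real measure \<Rightarrow> real \<Rightarrow> real \<Rightarrow> complex \<Rightarrow> complex" where
  "F_shift Ap Am Bp Bm Gp Gm t =
       cauchy_transform Ap (1 / t) / t^2 - total_mass Ap / t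
     + cauchy_transform Bp (- 1 / t) / t^2 + total_mass Bp / t
     - cauchy_transform Am (- ((1 + t) / t)) / t^2 - total_mass Am / (t * (1 + t))
     - cauchy_transform Bm ((1 + t) / t) / t^2 + total_mass Bm / (t * (1 + t))
     + complex_of_real Gp - complex_of_real Gm / (1 + t)^2"

fun iter_dderiv :: "('a::real_normed_vector \<Rightarrow> 'b::real_normed_vector) \<Rightarrow> 'a list \<Rightarrow> 'a \<Rightarrow> 'b" where
  "iter_dderiv f [] = f"
| "iter_dderiv f (v # vs) = (\<lambda>x. frechet_derivative (iter_dderiv f vs) (at x) v)"

definition smooth_on :: "'a::real_normed_vector set \<Rightarrow> ('a \<Rightarrow> 'b::real_normed_vector) \<Rightarrow> bool" where
  "smooth_on S f \<longleftrightarrow> (\<forall>vs. \<forall>x\<in>S. iter_dderiv f vs differentiable (at x))"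

definition diffeomorphism_on ::
  "'a::real_normed_vector set \<Rightarrow> 'b::real_normed_vector set \<Rightarrow> ('a \<Rightarrow> 'b) \<Rightarrow> bool" where
  "diffeomorphism_on S T f \<longleftrightarrow> open S \<and> open T \<and> bij_betw f S T \<and>
     smooth_on S f \<and> smooth_on T (inv_into S f)"

end

theory Submission
  imports Defs "HOL-Homology.Invariance_of_Domain" "HOL-Complex_Analysis.Complex_Analysis"
begin


definition UH :: "complex set" where "UH = {z. Im z > 0}"

lemma open_UH: "open UH"
  unfolding UH_def by (simp add: open_halfspace_Im_gt)

definition mob :: "real \<Rightarrow> real \<Rightarrow> real \<Rightarrow> complex \<Rightarrow> complex" where
  "mob a b g z = (of_real a * z + of_real b) / (1 + of_real g * z)"

lemma mob_den_nz: "Im z \<noteq> 0 \<Longrightarrow> 1 + complex_of_real g * z \<noteq> 0"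
proof
  assume "Im z \<noteq> 0" "1 + complex_of_real g * z = 0"
  then have "Im (1 + complex_of_real g * z) = 0" "Re (1 + complex_of_real g * z) = 0" by simp_all
  then show False using \<open>Im z \<noteq> 0\<close> by (cases "g = 0") auto
qed

lemma cnj_mob: "cnj (mob a b g z) = mob a b g (cnj z)"
  unfolding mob_def by simp

lemma mob_diff:
  assumes "Im z \<noteq> 0" "Im w \<noteq> 0"
  shows "mob a b g z - mob a b g w = of_real (a - b*g) * (z - w) / ((1 + of_real g * z) * (1 + of_real g * w))"
proof -
  have 1: "1 + complex_of_real g * z \<noteq> 0" "1 + complex_of_real g * w \<noteq> 0"
    using assms mob_den_nz by auto
  show ?thesis unfolding mob_def using 1 by (simp add: field_simps)
qed

definition s2 :: "complex \<Rightarrow> complex \<Rightarrow> complex \<Rightarrow> complex \<Rightarrow> real" where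
  "s2 z1 z2 w1 w2 = Re (z1 * cnj z1 * (w1 - cnj w1) / (z1 - cnj z1) + z2 * cnj z2 * (w2 - cnj w2) / (z2 - cnj z2)
      - z1 * cnj z2 * (w1 - cnj w2) / (z1 - cnj z2) - z2 * cnj z1 * (w2 - cnj w1) / (z2 - cnj z1))"

definition e1 :: "complex \<Rightarrow> complex \<Rightarrow> complex \<Rightarrow> real" where
  "e1 z w d = Re ((w - cnj w) / (z - cnj z) + z * (d / (z - cnj z) - (w - cnj w) / (z - cnj z)^2)
      + cnj z * (- cnj d / (z - cnj z) + (w - cnj w) / (z - cnj z)^2)
      + z * cnj z * ((d + cnj d) / (z - cnj z)^2 - 2 * (w - cnj w) / (z - cnj z)^3))"

lemma s2_add: "s2 z1 z2 (w1 + v1) (w2 + v2) = s2 z1 z2 w1 w2 + s2 z1 z2 v1 v2"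
  unfolding s2_def by (simp add: add_divide_distrib diff_divide_distrib distrib_left right_diff_distrib)

lemma e1_add: "e1 z (w + v) (d + d') = e1 z w d + e1 z v d'"
  unfolding e1_def by (simp add: add_divide_distrib diff_divide_distrib distrib_left right_diff_distrib)

lemma nz_UH: "Im z > 0 \<Longrightarrow> Im w > 0 \<Longrightarrow> z - cnj w \<noteq> 0"
proof
  assume "Im z > 0" "Im w > 0" "z - cnj w = 0"
  then have "Im (z - cnj w) = 0" by simp
  then show False using \<open>Im z > 0\<close> \<open>Im w > 0\<close> by simp
qed

lemma mob_pair:
  assumes "Im z > 0" "Im w > 0"
  shows "(mob a b g z - cnj (mob a b g w)) / (z - cnj w)
       = of_real (a - b*g) * (1 / (1 + of_real g * z)) * cnj (1 / (1 + of_real g * w))"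
proof -
  have "Im (cnj w) \<noteq> 0" using assms by simp
  then have "mob a b g z - cnj (mob a b g w) = of_real (a - b*g) * (z - cnj w) / ((1 + of_real g * z) * (1 + of_real g * cnj w))"
    using mob_diff[of z "cnj w" a b g] assms by (simp add: cnj_mob)
  moreover have "z - cnj w \<noteq> 0" using nz_UH assms by blast
  moreover have "cnj (1 / (1 + of_real g * w)) = 1 / (1 + of_real g * cnj w)" by simp
  ultimately show ?thesis by simp
qed

lemma s2_alg: "z1 * cnj z1 * (k * u1 * cnj u1) + z2 * cnj z2 * (k * u2 * cnj u2)
    - z1 * cnj z2 * (k * u1 * cnj u2) - z2 * cnj z1 * (k * u2 * cnj u1)
   = k * ((z1*u1 - z2*u2) * cnj (z1*u1 - z2*u2))"
  by (simp add: algebra_simps)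

lemma s2_mob:
  assumes "Im z1 > 0" "Im z2 > 0"
  shows "s2 z1 z2 (mob a b g z1) (mob a b g z2)
       = (a - b*g) * (cmod (z1 / (1 + of_real g * z1) - z2 / (1 + of_real g * z2)))^2"
proof -
  define u1 where "u1 = 1 / (1 + complex_of_real g * z1)"
  define u2 where "u2 = 1 / (1 + complex_of_real g * z2)"
  define P where "P = (\<lambda>z w. (mob a b g z - cnj (mob a b g w)) / (z - cnj w))"
  have p: "P z1 z1 = of_real (a - b*g) * u1 * cnj u1" "P z2 z2 = of_real (a - b*g) * u2 * cnj u2"
      "P z1 z2 = of_real (a - b*g) * u1 * cnj u2" "P z2 z1 = of_real (a - b*g) * u2 * cnj u1"
    unfolding P_def u1_def u2_def using mob_pair assms by auto
  have "s2 z1 z2 (mob a b g z1) (mob a b g z2) = Re (z1 * cnj z1 * P z1 z1 + z2 * cnj z2 * P z2 z2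
     - z1 * cnj z2 * P z1 z2 - z2 * cnj z1 * P z2 z1)"
    unfolding s2_def P_def by simp
  also have "\<dots> = Re (of_real (a - b*g) * ((z1*u1 - z2*u2) * cnj (z1*u1 - z2*u2)))"
    unfolding p s2_alg ..
  also have "\<dots> = (a - b*g) * (cmod (z1*u1 - z2*u2))^2"
    by (simp only: complex_norm_square[symmetric] Re_complex_of_real of_real_mult[symmetric])
  finally show ?thesis by (simp add: u1_def u2_def)
qed

lemma e_alg:
  fixes z q g k :: complex
  assumes D: "z - q \<noteq> 0" and A: "1 + g*z \<noteq> 0" and B: "1 + g*q \<noteq> 0"
  shows "(k*(z-q)/((1+g*z)*(1+g*q)))/(z - q) + z*((k/(1+g*z)^2)/(z-q) - (k*(z-q)/((1+g*z)*(1+g*q)))/(z-q)^2)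
      + q*(-(k/(1+g*q)^2)/(z-q) + (k*(z-q)/((1+g*z)*(1+g*q)))/(z-q)^2)
      + z*q*(((k/(1+g*z)^2) + (k/(1+g*q)^2))/(z-q)^2 - 2*(k*(z-q)/((1+g*z)*(1+g*q)))/(z-q)^3)
     = k / ((1+g*z)^2 * (1+g*q)^2)"
proof -
  define a where "a = 1 + g*z"
  define b where "b = 1 + g*q"
  define d where "d = z - q"
  have ba: "b - a = - g * d" unfolding a_def b_def d_def by (simp add: algebra_simps)
  have a0: "a \<noteq> 0" and b0: "b \<noteq> 0" and d0: "d \<noteq> 0" using A B D by (auto simp: a_def b_def d_def)
  have t1: "(k*d/(a*b))/d = k/(a*b)" using d0 by simp
  have t2: "z*((k/a^2)/d - (k*d/(a*b))/d^2) = -z*k*g/(a^2*b)"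
  proof -
    have "(k/a^2)/d - (k*d/(a*b))/d^2 = k*(b - a)/(a^2*b*d)"
      using a0 b0 d0 by (simp add: field_simps power2_eq_square)
    also have "\<dots> = - k*g/(a^2*b)" unfolding ba using d0 by (simp add: field_simps power2_eq_square)
    finally show ?thesis by simp
  qed
  have t3: "q*(-(k/b^2)/d + (k*d/(a*b))/d^2) = -q*k*g/(a*b^2)"
  proof -
    have "-(k/b^2)/d + (k*d/(a*b))/d^2 = k*(b - a)/(a*b^2*d)"
      using a0 b0 d0 by (simp add: field_simps power2_eq_square)
    also have "\<dots> = - k*g/(a*b^2)" unfolding ba using d0 by (simp add: field_simps power2_eq_square)
    finally show ?thesis by simp
  qed
  have t4: "z*q*(((k/a^2) + (k/b^2))/d^2 - 2*(k*d/(a*b))/d^3) = z*q*k*g^2/(a^2*b^2)"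
  proof -
    have "((k/a^2) + (k/b^2))/d^2 - 2*(k*d/(a*b))/d^3 = k*(b - a)^2/(a^2*b^2*d^2)"
      using a0 b0 d0 by (simp add: field_simps power2_eq_square power3_eq_cube)
    also have "\<dots> = k*g^2/(a^2*b^2)" unfolding ba using d0 by (simp add: field_simps power2_eq_square)
    finally show ?thesis by simp
  qed
  have "k/(a*b) + -z*k*g/(a^2*b) + -q*k*g/(a*b^2) + z*q*k*g^2/(a^2*b^2) = k*(a - z*g)*(b - q*g)/(a^2*b^2)"
    using a0 b0 by (simp add: field_simps power2_eq_square)
  also have "\<dots> = k/(a^2*b^2)" by (simp add: a_def b_def mult.commute)
  finally show ?thesis using t1 t2 t3 t4 unfolding a_def[symmetric] b_def[symmetric] d_def[symmetric]
    by simp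
qed

lemma e1_mob:
  assumes "Im z > 0"
  shows "e1 z (mob a b g z) (of_real (a - b*g) / (1 + of_real g * z)^2)
       = (a - b*g) / (cmod (1 + of_real g * z))^4"
proof -
  define k where "k = complex_of_real (a - b*g)"
  define A where "A = 1 + complex_of_real g * z"
  have A0: "A \<noteq> 0" unfolding A_def using mob_den_nz assms by auto
  have B0: "1 + complex_of_real g * cnj z \<noteq> 0" using mob_den_nz assms by auto
  have D0: "z - cnj z \<noteq> 0" using nz_UH assms by blast
  have W: "mob a b g z - cnj (mob a b g z) = k * (z - cnj z) / (A * (1 + of_real g * cnj z))"
    unfolding cnj_mob k_def A_def by (rule mob_diff) (use assms in auto)
  have cd: "cnj (k / A^2) = k / (1 + of_real g * cnj z)^2" by (simp add: k_def A_def)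
  have "e1 z (mob a b g z) (k / A^2) = Re (k / (A^2 * (1 + of_real g * cnj z)^2))"
    unfolding e1_def W cd using e_alg[OF D0 A0[unfolded A_def] B0, of k] by (simp add: A_def)
  also have "A^2 * (1 + of_real g * cnj z)^2 = of_real ((cmod A)^4)"
  proof -
    have "(1 + of_real g * cnj z) = cnj A" by (simp add: A_def)
    then have "A^2 * (1 + of_real g * cnj z)^2 = (A * cnj A)^2" by (simp add: power_mult_distrib)
    also have "\<dots> = of_real ((cmod A)^4)" by (simp add: complex_norm_square[symmetric])
    finally show ?thesis .
  qed
  finally show ?thesis by (simp add: k_def A_def del: of_real_power)
qed

lemma s2_m:
  assumes "Im z1 > 0" "Im z2 > 0"
  shows "s2 z1 z2 (of_real c - of_real eta / z1) (of_real c - of_real eta / z2) = 0"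
proof -
  have pr: "(of_real c - of_real eta / z - cnj (of_real c - of_real eta / w)) / (z - cnj w) = of_real eta / (z * cnj w)"
    if "Im z > 0" "Im w > 0" for z w
  proof -
    have "z \<noteq> 0" "cnj w \<noteq> 0" using that by auto
    moreover have "z - cnj w \<noteq> 0" using nz_UH that by blast
    ultimately show ?thesis by (simp add: field_simps)
  qed
  have z0: "z1 \<noteq> 0" "z2 \<noteq> 0" using assms by auto
  define P where "P = (\<lambda>z w. (of_real c - of_real eta / z - cnj (of_real c - of_real eta / w)) / (z - cnj w))"
  have "s2 z1 z2 (of_real c - of_real eta / z1) (of_real c - of_real eta / z2) = Re (z1 * cnj z1 * P z1 z1 + z2 * cnj z2 * P z2 z2
     - z1 * cnj z2 * P z1 z2 - z2 * cnj z1 * P z2 z1)"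
    unfolding s2_def P_def by simp
  also have "\<dots> = 0" unfolding P_def pr[OF assms(1) assms(1)] pr[OF assms(2) assms(2)] pr[OF assms(1) assms(2)] pr[OF assms(2) assms(1)]
    using z0 by simp
  finally show ?thesis .
qed

lemma e1_m:
  assumes "Im z > 0"
  shows "e1 z (of_real c - of_real eta / z) (of_real eta / z^2) = 0"
proof -
  have z0: "z \<noteq> 0" "cnj z \<noteq> 0" using assms by auto
  have D0: "z - cnj z \<noteq> 0" using nz_UH assms by blast
  define cz where "cz = cnj z"
  define d where "d = z - cz"
  define k where "k = complex_of_real eta"
  have W: "of_real c - of_real eta / z - cnj (of_real c - of_real eta / z) = k * d / (z * cz)"
    using z0 by (simp add: field_simps k_def d_def cz_def)
  have cd: "cnj (k / z^2) = k / cz^2" by (simp add: k_def cz_def)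
  have d0: "d \<noteq> 0" "cz \<noteq> 0" "z \<noteq> 0" using D0 z0 by (auto simp: d_def cz_def)
  have dd: "cz - z = - d" by (simp add: d_def cz_def)
  have t2: "z * ((k / z^2) / d - (k*d/(z* cz))/d^2) = - k / (z* cz)"
  proof -
    have "(k / z^2) / d - (k*d/(z* cz))/d^2 = k * (cz - z)/(z^2* cz*d)" using d0 by (simp add: field_simps power2_eq_square)
    then show ?thesis unfolding dd using d0 by (simp add: field_simps power2_eq_square)
  qed
  have t3: "cz * (- (k / cz^2) / d + (k*d/(z* cz))/d^2) = - k / (z* cz)"
  proof -
    have "- (k / cz^2) / d + (k*d/(z* cz))/d^2 = k * (cz - z)/(z* cz^2*d)" using d0 by (simp add: field_simps power2_eq_square)
    then show ?thesis unfolding dd using d0 by (simp add: field_simps power2_eq_square)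
  qed
  have t4: "z * cz * ((k / z^2 + k / cz^2) / d^2 - 2 * (k*d/(z* cz)) / d^3) = k / (z* cz)"
  proof -
    have "(k / z^2 + k / cz^2) / d^2 - 2 * (k*d/(z* cz)) / d^3 = k * (cz - z)^2/(z^2* cz^2*d^2)"
      using d0 by (simp add: field_simps power2_eq_square power3_eq_cube)
    then show ?thesis unfolding dd using d0 by (simp add: field_simps power2_eq_square)
  qed
  have t1: "(k*d/(z* cz)) / d = k / (z* cz)" using d0 by simp
  have "e1 z (of_real c - of_real eta / z) (k / z^2) = Re (k/(z* cz) + - k/(z* cz) + - k/(z* cz) + k/(z* cz))"
    unfolding e1_def W cd cz_def[symmetric] d_def[symmetric] t1 t2 t3 t4 ..
  then show ?thesis by (simp add: k_def)
qed




lemma mob_bound: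
  assumes "Im s > 0"
  shows "norm (1 / (1 + complex_of_real g * s)) \<le> cmod s / Im s"
proof -
  have "Im s = \<bar>Im (cnj s * (1 + complex_of_real g * s))\<bar>" using assms by (simp add: algebra_simps)
  also have "\<dots> \<le> cmod (cnj s * (1 + complex_of_real g * s))" by (rule abs_Im_le_cmod)
  also have "\<dots> = cmod s * cmod (1 + complex_of_real g * s)" by (simp add: norm_mult)
  finally have *: "Im s \<le> cmod s * cmod (1 + complex_of_real g * s)" .
  have "cmod (1 + complex_of_real g * s) > 0" using mob_den_nz[of s g] assms by auto
  then show ?thesis using * assms by (simp add: norm_divide field_simps)
qed

lemma mob_norm_le:
  assumes "Im s > 0" "\<bar>a\<bar> \<le> Bd" "\<bar>b\<bar> \<le> Bd"
  shows "norm (mob a b g s) \<le> (Bd * cmod s + Bd) * (cmod s / Im s)"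
proof -
  have "norm (mob a b g s) = norm (of_real a * s + of_real b) * norm (1 / (1 + complex_of_real g * s))"
    unfolding mob_def by (simp add: norm_divide)
  also have "\<dots> \<le> (Bd * cmod s + Bd) * (cmod s / Im s)"
  proof (rule mult_mono)
    have "norm (of_real a * s + of_real b) \<le> \<bar>a\<bar> * cmod s + \<bar>b\<bar>"
      by (metis norm_mult norm_of_real norm_triangle_le order_refl)
    also have "\<dots> \<le> Bd * cmod s + Bd" using assms by (simp add: mult_right_mono add_mono)
    finally show "norm (of_real a * s + of_real b) \<le> Bd * cmod s + Bd" .
  qed (use mob_bound assms in auto)
  finally show ?thesis .
qed

lemma mono4: fixes c P U V K1 K2 K3 :: real
  assumes "0 \<le> c" "0 \<le> P" "P \<le> K1" "0 \<le> U" "U \<le> K2" "0 \<le> V" "V \<le> K3"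
  shows "c*P*U*V^2 \<le> c*K1*K2*K3^2"
proof -
  have "P*U \<le> K1*K2" using assms by (intro mult_mono) auto
  moreover have "V^2 \<le> K3^2" using assms by (intro power_mono) auto
  ultimately have "(P*U)*V^2 \<le> (K1*K2)*K3^2" using assms by (intro mult_mono) auto
  then show ?thesis using assms(1) mult_left_mono by (metis mult.assoc)
qed

lemma norm_div_sq: "norm (c / (A::complex)^2) = norm c * (norm (1 / A))^2"
  by (simp add: divide_inverse norm_mult norm_inverse norm_power power_inverse)

lemma mob_Im:
  assumes "Im z > 0"
  shows "Im (mob a b g z) = (a - b*g) * Im z * (cmod (1 / (1 + of_real g * z)))^2"
proof -
  define u where "u = 1 / (1 + complex_of_real g * z)"
  have "(mob a b g z - cnj (mob a b g z)) / (z - cnj z) = of_real (a - b*g) * u * cnj u"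
    unfolding u_def using mob_pair[OF assms assms] by simp
  moreover have "z - cnj z \<noteq> 0" using nz_UH assms by blast
  ultimately have "mob a b g z - cnj (mob a b g z) = of_real (a - b*g) * (u * cnj u) * (z - cnj z)"
    by (simp add: field_simps)
  also have "u * cnj u = of_real ((cmod u)^2)" by (simp only: complex_norm_square)
  finally have "Im (mob a b g z - cnj (mob a b g z)) = Im (of_real (a - b*g) * of_real ((cmod u)^2) * (z - cnj z))"
    by simp
  then show ?thesis by (simp add: u_def)
qed

lemma s2_lin: "s2 z1 z2 w1 w2 = Re (
     (z1 * cnj z1 / (z1 - cnj z1) - z1 * cnj z2 / (z1 - cnj z2)) * w1
   + (z2 * cnj z1 / (z2 - cnj z1) - z1 * cnj z1 / (z1 - cnj z1)) * cnj w1
   + (z2 * cnj z2 / (z2 - cnj z2) - z2 * cnj z1 / (z2 - cnj z1)) * w2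
   + (z1 * cnj z2 / (z1 - cnj z2) - z2 * cnj z2 / (z2 - cnj z2)) * cnj w2)"
  unfolding s2_def by (simp add: diff_divide_distrib right_diff_distrib left_diff_distrib)

lemma e1_lin: "e1 z w d = Re (
     (1 / (z - cnj z) - z / (z - cnj z)^2 + cnj z / (z - cnj z)^2 - 2 * z * cnj z / (z - cnj z)^3) * w
   + (- (1 / (z - cnj z) - z / (z - cnj z)^2 + cnj z / (z - cnj z)^2 - 2 * z * cnj z / (z - cnj z)^3)) * cnj w
   + (z / (z - cnj z) + z * cnj z / (z - cnj z)^2) * d
   + (- cnj z / (z - cnj z) + z * cnj z / (z - cnj z)^2) * cnj d)"
  unfolding e1_def by (simp add: diff_divide_distrib add_divide_distrib right_diff_distrib left_diff_distrib
     distrib_left distrib_right mult_ac)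

lemma int_lin:
  fixes f g :: "'a \<Rightarrow> complex"
  assumes "integrable M f" "integrable M g"
  shows "Re (a * integral\<^sup>L M f + b * cnj (integral\<^sup>L M f) + c * integral\<^sup>L M g + d * cnj (integral\<^sup>L M g))
       = integral\<^sup>L M (\<lambda>x. Re (a * f x + b * cnj (f x) + c * g x + d * cnj (g x)))"
proof -
  have eq: "integral\<^sup>L M (\<lambda>x. a * f x + b * cnj (f x) + c * g x + d * cnj (g x))
      = a * integral\<^sup>L M f + b * cnj (integral\<^sup>L M f) + c * integral\<^sup>L M g + d * cnj (integral\<^sup>L M g)"
    using assms by (simp add: integral_cnj[symmetric])
  have hint: "integrable M (\<lambda>x. a * f x + b * cnj (f x) + c * g x + d * cnj (g x))"
    using assms by (intro Bochner_Integration.integrable_add integrable_mult_right integrable_cnj)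
  show ?thesis unfolding eq[symmetric] by (rule integral_Re[OF hint, symmetric])
qed

locale mobfam =
  fixes M :: "real measure" and al be ga :: "real \<Rightarrow> real" and Bd :: real
  assumes sets_M: "sets M = sets borel" and fin: "finite_measure M"
    and cal: "continuous_on UNIV al" and cbe: "continuous_on UNIV be" and cga: "continuous_on UNIV ga"
    and bnd: "AE x in M. \<bar>al x\<bar> \<le> Bd \<and> \<bar>be x\<bar> \<le> Bd \<and> \<bar>ga x\<bar> \<le> Bd"
begin

definition I :: "complex \<Rightarrow> complex" where
  "I z = integral\<^sup>L M (\<lambda>x. mob (al x) (be x) (ga x) z)"
definition I' :: "complex \<Rightarrow> complex" where
  "I' z = integral\<^sup>L M (\<lambda>x. of_real (al x - be x * ga x) / (1 + of_real (ga x) * z)^2)"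

lemma mal: "al \<in> borel_measurable M" and mbe: "be \<in> borel_measurable M" and mga: "ga \<in> borel_measurable M"
  using borel_measurable_continuous_onI[OF cal] borel_measurable_continuous_onI[OF cbe]
    borel_measurable_continuous_onI[OF cga] measurable_cong_sets[OF sets_M refl] by auto


lemma integrable_const_M: "integrable M (\<lambda>x. c::'b::{banach,second_countable_topology})"
  using finite_measure.integrable_const[OF fin] .

lemma int_gen:
  fixes f :: "real \<Rightarrow> complex"
  assumes "f \<in> borel_measurable M" "AE x in M. norm (f x) \<le> C"
  shows "integrable M f"
proof (rule Bochner_Integration.integrable_bound[OF integrable_const_M[of "complex_of_real \<bar>C\<bar>"] assms(1)])
  show "AE x in M. norm (f x) \<le> norm (complex_of_real \<bar>C\<bar>)" using assms(2) by eventually_elim auto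
qed

lemma meas_mob: "(\<lambda>x. mob (al x) (be x) (ga x) z) \<in> borel_measurable M"
  unfolding mob_def using mal mbe mga by measurable

lemma meas_d: "(\<lambda>x. of_real (al x - be x * ga x) / (1 + of_real (ga x) * z)^2 :: complex) \<in> borel_measurable M"
  using mal mbe mga by measurable

lemma int_mob: assumes "Im z > 0" shows "integrable M (\<lambda>x. mob (al x) (be x) (ga x) z)"
proof (rule int_gen[OF meas_mob])
  show "AE x in M. norm (mob (al x) (be x) (ga x) z) \<le> (Bd * cmod z + Bd) * (cmod z / Im z)"
    using bnd by eventually_elim (use mob_norm_le assms in blast)
qed


lemma int_d: assumes "Im z > 0"
  shows "integrable M (\<lambda>x. of_real (al x - be x * ga x) / (1 + of_real (ga x) * z)^2 :: complex)"
proof (rule int_gen[OF meas_d])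
  show "AE x in M. norm (of_real (al x - be x * ga x) / (1 + of_real (ga x) * z)^2 :: complex)
      \<le> (Bd + Bd * Bd) * (cmod z / Im z)^2"
    using bnd
  proof eventually_elim
    case (elim x)
    have k: "\<bar>al x - be x * ga x\<bar> \<le> Bd + Bd * Bd"
    proof -
      have "\<bar>al x - be x * ga x\<bar> \<le> \<bar>al x\<bar> + \<bar>be x\<bar> * \<bar>ga x\<bar>" by (simp add: abs_mult abs_triangle_ineq4 order_trans[OF abs_triangle_ineq4])
      also have "\<dots> \<le> Bd + Bd * Bd" using elim by (intro add_mono mult_mono) auto
      finally show ?thesis .
    qed
    have u: "norm (1 / (1 + complex_of_real (ga x) * z)) \<le> cmod z / Im z" using mob_bound assms by blast
    have "norm (of_real (al x - be x * ga x) / (1 + of_real (ga x) * z)^2 :: complex)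
       = norm (complex_of_real (al x - be x * ga x)) * (norm (1 / (1 + complex_of_real (ga x) * z)))^2"
      by (rule norm_div_sq)
    also have "\<dots> = \<bar>al x - be x * ga x\<bar> * (norm (1 / (1 + complex_of_real (ga x) * z)))^2"
      by (simp only: norm_of_real)
    also have "\<dots> \<le> (Bd + Bd * Bd) * (cmod z / Im z)^2"
      using k u by (intro mult_mono power_mono) auto
    finally show ?case .
  qed
qed

lemma norm_int_le:
  fixes f :: "real \<Rightarrow> complex"
  assumes "integrable M f" "AE x in M. norm (f x) \<le> C"
  shows "norm (integral\<^sup>L M f) \<le> C * measure M (space M)"
proof -
  have "norm (integral\<^sup>L M f) \<le> integral\<^sup>L M (\<lambda>x. norm (f x))" by (rule integral_norm_bound)
  also have "\<dots> \<le> integral\<^sup>L M (\<lambda>x. C)"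
    by (rule integral_mono_AE) (use assms integrable_const_M in auto)
  also have "\<dots> = C * measure M (space M)" by simp
  finally show ?thesis .
qed

lemma deriv_pt:
  assumes "Im w > 0" "Im z > 0" "w \<noteq> z"
  shows "(mob a b g w - mob a b g z) / (w - z) - of_real (a - b*g) / (1 + of_real g * z)^2
       = - (w - z) * of_real (a - b*g) * of_real g / ((1 + of_real g * w) * (1 + of_real g * z)^2)"
proof -
  have d: "1 + complex_of_real g * w \<noteq> 0" "1 + complex_of_real g * z \<noteq> 0" using mob_den_nz assms by auto
  have ne: "Im w \<noteq> 0" "Im z \<noteq> 0" using assms by auto
  have wz: "w - z \<noteq> 0" using assms by simp
  define A where "A = 1 + complex_of_real g * w"
  define C where "C = 1 + complex_of_real g * z"
  define k where "k = complex_of_real (a - b*g)"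
  have CA: "C - A = - of_real g * (w - z)" unfolding A_def C_def by (simp add: algebra_simps)
  have A0: "A \<noteq> 0" "C \<noteq> 0" using d by (auto simp: A_def C_def)
  have "(k * (w - z) / (A * C)) / (w - z) - k / C^2 = k * (C - A) / (A * C^2)"
    using A0 wz by (simp add: field_simps power2_eq_square)
  then show ?thesis unfolding mob_diff[OF ne] A_def[symmetric] C_def[symmetric] k_def[symmetric] CA
    using A0 wz by (simp add: field_simps)
qed

lemma has_deriv_I:
  assumes z: "Im z > 0"
  shows "(I has_field_derivative I' z) (at z)"
proof -
  define r where "r = Im z / 2"
  have r: "r > 0" using z by (simp add: r_def)
  define Kc where "Kc = ((Bd + Bd * Bd) * Bd) * ((cmod z + r) / r) * (cmod z / Im z)^2 * measure M (space M)"
  have bound: "norm ((I w - I z) / (w - z) - I' z) \<le> Kc * cmod (w - z)"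
    if w: "w \<noteq> z" "dist w z < r" for w
  proof -
    have dwz: "cmod (w - z) < r" using w by (simp add: dist_norm)
    have "\<bar>Im w - Im z\<bar> \<le> cmod (w - z)" using abs_Im_le_cmod[of "w - z"] by simp
    then have imw: "Im w > r" using dwz r by (simp add: r_def)
    then have imw0: "Im w > 0" using r by linarith
    have cw: "cmod w \<le> cmod z + r" using norm_triangle_ineq2[of w z] dwz by linarith
    define f where "f = (\<lambda>x. - (w - z) * of_real (al x - be x * ga x) * of_real (ga x)
        / ((1 + of_real (ga x) * w) * (1 + of_real (ga x) * z)^2))"
    have eq: "(I w - I z) / (w - z) - I' z = integral\<^sup>L M f"
    proof -
      have "(I w - I z) / (w - z) - I' z = integral\<^sup>L M (\<lambda>x. (mob (al x) (be x) (ga x) w - mob (al x) (be x) (ga x) z) / (w - z)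
           - of_real (al x - be x * ga x) / (1 + of_real (ga x) * z)^2)"
      proof -
        have "I w - I z = integral\<^sup>L M (\<lambda>x. mob (al x) (be x) (ga x) w - mob (al x) (be x) (ga x) z)"
          unfolding I_def by (simp add: Bochner_Integration.integral_diff int_mob z imw0)
        then have "(I w - I z) / (w - z) = integral\<^sup>L M (\<lambda>x. (mob (al x) (be x) (ga x) w - mob (al x) (be x) (ga x) z) / (w - z))"
          by simp
        moreover have intq: "integrable M (\<lambda>x. (mob (al x) (be x) (ga x) w - mob (al x) (be x) (ga x) z) / (w - z))"
          by (intro integrable_divide Bochner_Integration.integrable_diff int_mob z imw0)
        ultimately show ?thesis unfolding I'_def
          by (simp only: Bochner_Integration.integral_diff[OF intq int_d[OF z]])
      qed
      also have "\<dots> = integral\<^sup>L M f"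
        unfolding f_def by (rule Bochner_Integration.integral_cong[OF refl]) (rule deriv_pt[OF imw0 z w(1)])
      finally show ?thesis .
    qed
    have intf: "integrable M f"
    proof -
      have "integrable M (\<lambda>x. (mob (al x) (be x) (ga x) w - mob (al x) (be x) (ga x) z) / (w - z)
           - of_real (al x - be x * ga x) / (1 + of_real (ga x) * z)^2)"
        by (intro Bochner_Integration.integrable_diff integrable_divide int_mob int_d z imw0)
      then show ?thesis unfolding f_def
        by (rule Bochner_Integration.integrable_cong[OF refl, THEN iffD1, rotated])
           (rule deriv_pt[OF imw0 z w(1)])
    qed
    have "AE x in M. norm (f x) \<le> cmod (w - z) * ((Bd + Bd * Bd) * Bd) * ((cmod z + r) / r) * (cmod z / Im z)^2"
      using bnd
    proof eventually_elim
      case (elim x)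
      have k: "\<bar>al x - be x * ga x\<bar> * \<bar>ga x\<bar> \<le> (Bd + Bd * Bd) * Bd"
      proof -
        have "\<bar>al x - be x * ga x\<bar> \<le> \<bar>al x\<bar> + \<bar>be x\<bar> * \<bar>ga x\<bar>" by (simp add: abs_mult order_trans[OF abs_triangle_ineq4])
        also have "\<dots> \<le> Bd + Bd * Bd" using elim by (intro add_mono mult_mono) auto
        finally show ?thesis using elim by (intro mult_mono) auto
      qed
      have u1: "norm (1 / (1 + complex_of_real (ga x) * w)) \<le> (cmod z + r) / r"
      proof -
        have "norm (1 / (1 + complex_of_real (ga x) * w)) \<le> cmod w / Im w" using mob_bound imw0 by blast
        also have "\<dots> \<le> (cmod z + r) / r" using cw imw r by (intro frac_le) auto
        finally show ?thesis .
      qed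
      have u2: "norm (1 / (1 + complex_of_real (ga x) * z)) \<le> cmod z / Im z" using mob_bound z by blast
      have "norm (f x) = cmod (w - z) * (\<bar>al x - be x * ga x\<bar> * \<bar>ga x\<bar>) * norm (1 / (1 + complex_of_real (ga x) * w))
          * (norm (1 / (1 + complex_of_real (ga x) * z)))^2"
      proof -
        have "cmod (of_real (al x) - of_real (be x) * of_real (ga x)) = \<bar>al x - be x * ga x\<bar>"
          by (metis norm_of_real of_real_diff of_real_mult)
        then show ?thesis
          unfolding f_def by (simp add: norm_divide norm_mult norm_power power_one_over norm_minus_commute)
      qed
      also have "\<dots> \<le> cmod (w - z) * ((Bd + Bd * Bd) * Bd) * ((cmod z + r) / r) * (cmod z / Im z)^2"
        using k u1 u2 by (intro mono4) auto
      finally show ?case .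
    qed
    then have "norm (integral\<^sup>L M f) \<le> cmod (w - z) * ((Bd + Bd * Bd) * Bd) * ((cmod z + r) / r) * (cmod z / Im z)^2 * measure M (space M)"
      by (rule norm_int_le[OF intf])
    then show ?thesis unfolding eq Kc_def by (simp add: mult_ac)
  qed
  have "((\<lambda>w. (I w - I z) / (w - z) - I' z) \<longlongrightarrow> 0) (at z)"
  proof (rule Lim_null_comparison)
    show "\<forall>\<^sub>F w in at z. norm ((I w - I z) / (w - z) - I' z) \<le> Kc * cmod (w - z)"
      unfolding eventually_at using r bound by (auto simp: dist_commute)
    have "((\<lambda>w. Kc * cmod (w - z)) \<longlongrightarrow> Kc * cmod (z - z)) (at z)"
      by (intro tendsto_intros)
    then show "((\<lambda>w. Kc * cmod (w - z)) \<longlongrightarrow> 0) (at z)" by simp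
  qed
  then have "((\<lambda>w. (I w - I z) / (w - z)) \<longlongrightarrow> I' z) (at z)" by (simp add: Lim_null[symmetric])
  then show ?thesis by (simp add: has_field_derivative_iff)
qed


lemma s2_I:
  assumes "Im z1 > 0" "Im z2 > 0" "AE x in M. al x - be x * ga x \<ge> 0"
  shows "s2 z1 z2 (I z1) (I z2) \<ge> 0"
proof -
  have "s2 z1 z2 (I z1) (I z2) = integral\<^sup>L M (\<lambda>x. s2 z1 z2 (mob (al x) (be x) (ga x) z1) (mob (al x) (be x) (ga x) z2))"
    unfolding s2_lin I_def by (rule int_lin) (use int_mob assms in auto)
  also have "\<dots> \<ge> 0"
  proof (rule integral_nonneg_AE)
    show "AE x in M. 0 \<le> s2 z1 z2 (mob (al x) (be x) (ga x) z1) (mob (al x) (be x) (ga x) z2)"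
      using assms(3) by eventually_elim (simp add: s2_mob assms)
  qed
  finally show ?thesis .
qed

lemma e1_I:
  assumes "Im z > 0" "AE x in M. al x - be x * ga x \<ge> 0"
  shows "e1 z (I z) (I' z) \<ge> 0"
proof -
  have "e1 z (I z) (I' z) = integral\<^sup>L M (\<lambda>x. e1 z (mob (al x) (be x) (ga x) z) (of_real (al x - be x * ga x) / (1 + of_real (ga x) * z)^2))"
    unfolding e1_lin I_def I'_def by (rule int_lin) (use int_mob int_d assms in auto)
  also have "\<dots> \<ge> 0"
  proof (rule integral_nonneg_AE)
    show "AE x in M. 0 \<le> e1 z (mob (al x) (be x) (ga x) z) (of_real (al x - be x * ga x) / (1 + of_real (ga x) * z)^2)"
      using assms(2) by eventually_elim (subst e1_mob[OF assms(1)], auto)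
  qed
  finally show ?thesis .
qed

lemma Im_I:
  assumes "Im z > 0" "AE x in M. al x - be x * ga x \<ge> 0"
  shows "Im (I z) \<ge> 0"
proof -
  have "Im (I z) = integral\<^sup>L M (\<lambda>x. Im (mob (al x) (be x) (ga x) z))"
    unfolding I_def by (rule integral_Im[symmetric]) (use int_mob assms in auto)
  also have "\<dots> \<ge> 0"
  proof (rule integral_nonneg_AE)
    show "AE x in M. 0 \<le> Im (mob (al x) (be x) (ga x) z)"
      using assms(2) by eventually_elim (use assms(1) in \<open>auto simp: mob_Im intro!: mult_nonneg_nonneg\<close>)
  qed
  finally show ?thesis .
qed

end



lemma frechet_derivative_cong:
  assumes "open S" "x \<in> S" "\<And>y. y \<in> S \<Longrightarrow> f y = g y"
  shows "frechet_derivative f (at x) = frechet_derivative g (at x)"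
proof -
  have "\<And>f'. (f has_derivative f') (at x) \<longleftrightarrow> (g has_derivative f') (at x)"
    using has_derivative_transform_within_open[OF _ assms(1,2), of f _ UNIV g]
      has_derivative_transform_within_open[OF _ assms(1,2), of g _ UNIV f] assms(3) by auto
  then show ?thesis unfolding frechet_derivative_def by simp
qed

lemma differentiable_cong_open:
  assumes "open S" "x \<in> S" "\<And>y. y \<in> S \<Longrightarrow> f y = g y" "g differentiable (at x)"
  shows "f differentiable (at x)"
  using assms has_derivative_transform_within_open[OF _ assms(1,2), of g _ UNIV f]
  unfolding differentiable_def by auto

lemma smooth_class:
  fixes P :: "('a::real_normed_vector \<Rightarrow> 'b::real_normed_vector) \<Rightarrow> bool"
  assumes S: "open S" and Pf: "P f"
    and cl: "\<And>h. P h \<Longrightarrow> (\<forall>x\<in>S. h differentiable (at x)) \<and>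
                 (\<forall>v. \<exists>h'. P h' \<and> (\<forall>x\<in>S. frechet_derivative h (at x) v = h' x))"
  shows "smooth_on S f"
proof -
  have main: "\<exists>h. P h \<and> (\<forall>x\<in>S. iter_dderiv f vs x = h x)" for vs
  proof (induction vs)
    case Nil then show ?case using Pf by auto
  next
    case (Cons v vs)
    then obtain h where h: "P h" "\<forall>x\<in>S. iter_dderiv f vs x = h x" by blast
    obtain h' where h': "P h'" "\<forall>x\<in>S. frechet_derivative h (at x) v = h' x" using cl[OF h(1)] by blast
    have "\<forall>x\<in>S. iter_dderiv f (v # vs) x = h' x"
    proof
      fix x assume x: "x \<in> S"
      have "iter_dderiv f (v # vs) x = frechet_derivative (iter_dderiv f vs) (at x) v" by simp
      also have "\<dots> = frechet_derivative h (at x) v"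
        using frechet_derivative_cong[OF S x, of "iter_dderiv f vs" h] h(2) by simp
      also have "\<dots> = h' x" using h' x by simp
      finally show "iter_dderiv f (v # vs) x = h' x" .
    qed
    then show ?case using h' by blast
  qed
  show ?thesis unfolding smooth_on_def
  proof (intro allI ballI)
    fix vs x assume x: "x \<in> S"
    obtain h where h: "P h" "\<forall>x\<in>S. iter_dderiv f vs x = h x" using main by blast
    show "iter_dderiv f vs differentiable (at x)"
      by (rule differentiable_cong_open[OF S x]) (use h cl x in auto)
  qed
qed

inductive mc :: "complex set \<Rightarrow> (complex \<Rightarrow> complex) \<Rightarrow> bool" for S where
  hol: "f holomorphic_on S \<Longrightarrow> mc S f"
| cnjh: "f holomorphic_on S \<Longrightarrow> mc S (\<lambda>z. cnj (f z))"
| add: "mc S f \<Longrightarrow> mc S g \<Longrightarrow> mc S (\<lambda>z. f z + g z)"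
| mul: "mc S f \<Longrightarrow> mc S g \<Longrightarrow> mc S (\<lambda>z. f z * g z)"
| inv: "mc S f \<Longrightarrow> (\<forall>z\<in>S. f z \<noteq> 0) \<Longrightarrow> mc S (\<lambda>z. inverse (f z))"

lemma mc_const: "mc S (\<lambda>z. c)" by (rule mc.hol) simp
lemma mc_id: "mc S (\<lambda>z. z)" by (rule mc.hol) simp

lemma mc_cnj: "mc S f \<Longrightarrow> mc S (\<lambda>z. cnj (f z))"
proof (induction rule: mc.induct)
  case (hol f) then show ?case by (rule mc.cnjh)
next
  case (cnjh f) then show ?case by (simp add: mc.hol)
next
  case (add f g) then show ?case using mc.add[OF add.IH] by simp
next
  case (mul f g) then show ?case using mc.mul[OF mul.IH] by simp
next
  case (inv f) then show ?case using mc.inv[OF inv.IH] by simp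
qed

lemma mc_minus: "mc S f \<Longrightarrow> mc S (\<lambda>z. - f z)"
  using mc.mul[OF mc_const[of S "-1"]] by simp

lemma mc_diff: "mc S f \<Longrightarrow> mc S g \<Longrightarrow> mc S (\<lambda>z. f z - g z)"
  using mc.add[OF _ mc_minus] by simp

lemma mc_divide: "mc S f \<Longrightarrow> mc S g \<Longrightarrow> (\<forall>z\<in>S. g z \<noteq> 0) \<Longrightarrow> mc S (\<lambda>z. f z / g z)"
  using mc.mul[OF _ mc.inv] by (simp add: divide_inverse)

lemma mc_Re: "mc S f \<Longrightarrow> mc S (\<lambda>z. of_real (Re (f z)))"
proof -
  assume "mc S f"
  then have "mc S (\<lambda>z. (f z + cnj (f z)) * (1/2))" by (intro mc.mul mc.add mc_cnj mc_const)
  moreover have "(\<lambda>z. (f z + cnj (f z)) * (1/2)) = (\<lambda>z. of_real (Re (f z)))"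
    by (auto simp: complex_add_cnj)
  ultimately show ?thesis by simp
qed

lemma mc_Im: "mc S f \<Longrightarrow> mc S (\<lambda>z. of_real (Im (f z)))"
proof -
  assume "mc S f"
  then have "mc S (\<lambda>z. (f z - cnj (f z)) * (- \<i>/2))" by (intro mc.mul mc_diff mc_cnj mc_const)
  moreover have "(\<lambda>z. (f z - cnj (f z)) * (- \<i>/2)) = (\<lambda>z. of_real (Im (f z)))"
    by (auto simp: complex_diff_cnj)
  ultimately show ?thesis by simp
qed

lemma mc_deriv:
  assumes S: "open S"
  shows "mc S f \<Longrightarrow> \<exists>f'. (\<forall>v. mc S (f' v)) \<and> (\<forall>z\<in>S. (f has_derivative (\<lambda>v. f' v z)) (at z))"
proof (induction rule: mc.induct)
  case (hol f)
  have "\<forall>z\<in>S. (f has_derivative (\<lambda>v. deriv f z * v)) (at z)"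
    using holomorphic_derivI[OF hol S] by (auto simp: has_field_derivative_def)
  moreover have "\<forall>v. mc S (\<lambda>z. deriv f z * v)"
    using holomorphic_deriv[OF hol S] by (auto intro!: mc.hol holomorphic_intros)
  ultimately show ?case by (intro exI[of _ "\<lambda>v z. deriv f z * v"]) auto
next
  case (cnjh f)
  have "\<forall>z\<in>S. ((\<lambda>z. cnj (f z)) has_derivative (\<lambda>v. cnj (deriv f z * v))) (at z)"
  proof
    fix z assume z: "z \<in> S"
    show "((\<lambda>z. cnj (f z)) has_derivative (\<lambda>v. cnj (deriv f z * v))) (at z)"
      using has_derivative_cnj[OF holomorphic_derivI[OF cnjh S z, of UNIV, unfolded has_field_derivative_def]]
      by (simp add: mult.commute)
  qed
  moreover have "\<forall>v. mc S (\<lambda>z. cnj (deriv f z * v))"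
    using mc.cnjh[OF holomorphic_on_mult[OF holomorphic_deriv[OF cnjh S] holomorphic_on_const]] by blast
  ultimately show ?case by (intro exI[of _ "\<lambda>v z. cnj (deriv f z * v)"]) auto
next
  case (add f g)
  then obtain f' g' where f': "\<forall>v. mc S (f' v)" "\<forall>z\<in>S. (f has_derivative (\<lambda>v. f' v z)) (at z)"
    and g': "\<forall>v. mc S (g' v)" "\<forall>z\<in>S. (g has_derivative (\<lambda>v. g' v z)) (at z)" by blast
  show ?case
    by (rule exI[of _ "\<lambda>v z. f' v z + g' v z"]) (use f' g' in \<open>auto intro!: mc.add has_derivative_add\<close>)
next
  case (mul f g)
  then obtain f' g' where f': "\<forall>v. mc S (f' v)" "\<forall>z\<in>S. (f has_derivative (\<lambda>v. f' v z)) (at z)"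
    and g': "\<forall>v. mc S (g' v)" "\<forall>z\<in>S. (g has_derivative (\<lambda>v. g' v z)) (at z)" by blast
  have "\<forall>v. mc S (\<lambda>z. f z * g' v z + f' v z * g z)"
  proof
    fix v show "mc S (\<lambda>z. f z * g' v z + f' v z * g z)"
      by (rule mc.add[OF mc.mul[OF mul.hyps(1) g'(1)[rule_format]] mc.mul[OF f'(1)[rule_format] mul.hyps(2)]])
  qed
  moreover have "\<forall>z\<in>S. ((\<lambda>z. f z * g z) has_derivative (\<lambda>v. f z * g' v z + f' v z * g z)) (at z)"
  proof
    fix z assume "z \<in> S"
    then show "((\<lambda>z. f z * g z) has_derivative (\<lambda>v. f z * g' v z + f' v z * g z)) (at z)"
      using has_derivative_mult[OF f'(2)[rule_format] g'(2)[rule_format]] by blast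
  qed
  ultimately show ?case by (intro exI[of _ "\<lambda>v z. f z * g' v z + f' v z * g z"] conjI) simp_all
next
  case (inv f)
  then obtain f' where f': "\<forall>v. mc S (f' v)" "\<forall>z\<in>S. (f has_derivative (\<lambda>v. f' v z)) (at z)" by blast
  have "\<forall>v. mc S (\<lambda>z. - (inverse (f z) * f' v z * inverse (f z)))"
  proof
    fix v show "mc S (\<lambda>z. - (inverse (f z) * f' v z * inverse (f z)))"
      by (rule mc_minus[OF mc.mul[OF mc.mul[OF mc.inv[OF inv.hyps] f'(1)[rule_format]] mc.inv[OF inv.hyps]]])
  qed
  moreover have "\<forall>z\<in>S. ((\<lambda>z. inverse (f z)) has_derivative (\<lambda>v. - (inverse (f z) * f' v z * inverse (f z)))) (at z)"
  proof
    fix z assume z: "z \<in> S"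
    then show "((\<lambda>z. inverse (f z)) has_derivative (\<lambda>v. - (inverse (f z) * f' v z * inverse (f z)))) (at z)"
      using Deriv.has_derivative_inverse[OF _ f'(2)[rule_format, OF z]] inv.hyps(2) z by blast
  qed
  ultimately show ?case by (intro exI[of _ "\<lambda>v z. - (inverse (f z) * f' v z * inverse (f z))"] conjI) simp_all
qed

lemma smooth_mc_pair:
  assumes S: "open S" and q: "mc S q1" "mc S q2" and f: "\<forall>z\<in>S. f z = (Re (q1 z), Re (q2 z))"
  shows "smooth_on S f"
proof (rule smooth_class[OF S, of "\<lambda>f. \<exists>q1 q2. mc S q1 \<and> mc S q2 \<and> (\<forall>z\<in>S. f z = (Re (q1 z), Re (q2 z)))"])
  show "\<exists>q1 q2. mc S q1 \<and> mc S q2 \<and> (\<forall>z\<in>S. f z = (Re (q1 z), Re (q2 z)))"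
    by (rule exI[of _ q1], rule exI[of _ q2]) (use q f in simp)
next
  fix h assume "\<exists>q1 q2. mc S q1 \<and> mc S q2 \<and> (\<forall>z\<in>S. h z = (Re (q1 z), Re (q2 z)))"
  then obtain q1 q2 where q: "mc S q1" "mc S q2" and h: "\<forall>z\<in>S. h z = (Re (q1 z), Re (q2 z))" by blast
  obtain q1' where q1': "\<forall>v. mc S (q1' v)" "\<forall>z\<in>S. (q1 has_derivative (\<lambda>v. q1' v z)) (at z)"
    using mc_deriv[OF S q(1)] by blast
  obtain q2' where q2': "\<forall>v. mc S (q2' v)" "\<forall>z\<in>S. (q2 has_derivative (\<lambda>v. q2' v z)) (at z)"
    using mc_deriv[OF S q(2)] by blast
  have hd: "(h has_derivative (\<lambda>v. (Re (q1' v z), Re (q2' v z)))) (at z)" if z: "z \<in> S" for z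
  proof -
    have "((\<lambda>z. (Re (q1 z), Re (q2 z))) has_derivative (\<lambda>v. (Re (q1' v z), Re (q2' v z)))) (at z)"
      by (intro has_derivative_Pair has_derivative_Re) (use q1' q2' z in blast)+
    then show ?thesis
      by (rule has_derivative_transform_within_open[OF _ S z]) (use h in auto)
  qed
  show "(\<forall>x\<in>S. h differentiable (at x)) \<and>
        (\<forall>v. \<exists>h'. (\<exists>q1 q2. mc S q1 \<and> mc S q2 \<and> (\<forall>z\<in>S. h' z = (Re (q1 z), Re (q2 z)))) \<and>
              (\<forall>x\<in>S. frechet_derivative h (at x) v = h' x))"
  proof (intro conjI allI ballI)
    fix x assume "x \<in> S" then show "h differentiable (at x)" using hd unfolding differentiable_def by blast
  next
    fix v
    show "\<exists>h'. (\<exists>q1 q2. mc S q1 \<and> mc S q2 \<and> (\<forall>z\<in>S. h' z = (Re (q1 z), Re (q2 z)))) \<and>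
              (\<forall>x\<in>S. frechet_derivative h (at x) v = h' x)"
    proof -
      have m: "mc S (q1' v)" "mc S (q2' v)" using q1' q2' by auto
      have fd: "\<forall>x\<in>S. frechet_derivative h (at x) v = (Re (q1' v x), Re (q2' v x))"
      proof
        fix x assume x: "x \<in> S"
        have e: "(\<lambda>v. (Re (q1' v x), Re (q2' v x))) = frechet_derivative h (at x)"
          by (rule frechet_derivative_at[OF hd[OF x]])
        show "frechet_derivative h (at x) v = (Re (q1' v x), Re (q2' v x))"
          using fun_cong[OF e[symmetric], of v] by simp
      qed
      show ?thesis
        by (rule exI[of _ "\<lambda>z. (Re (q1' v z), Re (q2' v z))"], rule conjI,
            rule exI[of _ "q1' v"], rule exI[of _ "q2' v"]) (use m fd in simp_all)
    qed
  qed
qed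


lemma lin_C:
  fixes L :: "complex \<Rightarrow> complex"
  assumes "bounded_linear L"
  shows "L u = of_real (Re u) * L 1 + of_real (Im u) * L \<i>"
proof -
  interpret L: bounded_linear L by fact
  have "u = Re u *\<^sub>R 1 + Im u *\<^sub>R \<i>" by (simp add: complex_eq_iff)
  then have "L u = L (Re u *\<^sub>R 1 + Im u *\<^sub>R \<i>)" by simp
  also have "\<dots> = Re u *\<^sub>R L 1 + Im u *\<^sub>R L \<i>" by (simp add: L.add L.scaleR)
  finally show ?thesis by (simp add: scaleR_conv_of_real)
qed

lemma smooth_comp_mc:
  fixes g :: "'a::real_normed_vector \<Rightarrow> complex"
  assumes D: "open D" and S: "open S" and gS: "\<forall>p\<in>D. g p \<in> S"
    and w: "\<forall>v. mc S (w v)" and gd: "\<forall>p\<in>D. (g has_derivative (\<lambda>v. w v (g p))) (at p)"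
    and q: "mc S q" and h: "\<forall>p\<in>D. h p = q (g p)"
  shows "smooth_on D h"
proof (rule smooth_class[OF D, of "\<lambda>h. \<exists>q. mc S q \<and> (\<forall>p\<in>D. h p = q (g p))"])
  show "\<exists>q. mc S q \<and> (\<forall>p\<in>D. h p = q (g p))" by (rule exI[of _ q]) (use q h in simp)
next
  fix h assume "\<exists>q. mc S q \<and> (\<forall>p\<in>D. h p = q (g p))"
  then obtain q where q: "mc S q" and h: "\<forall>p\<in>D. h p = q (g p)" by blast
  obtain q' where q': "\<forall>v. mc S (q' v)" "\<forall>z\<in>S. (q has_derivative (\<lambda>v. q' v z)) (at z)"
    using mc_deriv[OF S q] by blast
  have hd: "(h has_derivative (\<lambda>v. q' (w v (g p)) (g p))) (at p)" if p: "p \<in> D" for p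
  proof -
    have "((\<lambda>p. q (g p)) has_derivative (\<lambda>v. q' (w v (g p)) (g p))) (at p)"
      using has_derivative_compose[OF gd[rule_format, OF p] q'(2)[rule_format, OF gS[rule_format, OF p]]] .
    then show ?thesis
      by (rule has_derivative_transform_within_open[OF _ D p]) (use h in auto)
  qed
  have lin: "\<And>u z. z \<in> S \<Longrightarrow> q' u z = of_real (Re u) * q' 1 z + of_real (Im u) * q' \<i> z"
  proof -
    fix u z assume "z \<in> S"
    then have "bounded_linear (\<lambda>v. q' v z)" using q'(2) has_derivative_bounded_linear by blast
    from lin_C[OF this] show "q' u z = of_real (Re u) * q' 1 z + of_real (Im u) * q' \<i> z" .
  qed
  show "(\<forall>x\<in>D. h differentiable (at x)) \<and>
        (\<forall>v. \<exists>h'. (\<exists>q. mc S q \<and> (\<forall>p\<in>D. h' p = q (g p))) \<and> (\<forall>x\<in>D. frechet_derivative h (at x) v = h' x))"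
  proof (intro conjI allI ballI)
    fix x assume "x \<in> D" then show "h differentiable (at x)" using hd unfolding differentiable_def by blast
  next
    fix v
    define Q where "Q = (\<lambda>z. of_real (Re (w v z)) * q' 1 z + of_real (Im (w v z)) * q' \<i> z)"
    have mQ: "mc S Q" unfolding Q_def
      using w q'(1) by (intro mc.add mc.mul mc_Re mc_Im) auto
    have fd: "\<forall>p\<in>D. frechet_derivative h (at p) v = Q (g p)"
    proof
      fix p assume p: "p \<in> D"
      have e: "(\<lambda>v. q' (w v (g p)) (g p)) = frechet_derivative h (at p)"
        by (rule frechet_derivative_at[OF hd[OF p]])
      have "frechet_derivative h (at p) v = q' (w v (g p)) (g p)" using fun_cong[OF e[symmetric], of v] by simp
      also have "\<dots> = Q (g p)" unfolding Q_def using lin gS p by blast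
      finally show "frechet_derivative h (at p) v = Q (g p)" .
    qed
    show "\<exists>h'. (\<exists>q. mc S q \<and> (\<forall>p\<in>D. h' p = q (g p))) \<and> (\<forall>x\<in>D. frechet_derivative h (at x) v = h' x)"
      by (rule exI[of _ "\<lambda>p. Q (g p)"], rule conjI, rule exI[of _ Q]) (use mQ fd in simp_all)
  qed
qed





lemma int_bounded_fin:
  fixes f :: "real \<Rightarrow> 'b::{banach,second_countable_topology}"
  assumes "finite_measure M" "f \<in> borel_measurable M" "AE x in M. norm (f x) \<le> B"
  shows "integrable M f"
proof (rule Bochner_Integration.integrable_bound[OF finite_measure.integrable_const[OF assms(1), of "B"] assms(2)])
  show "AE x in M. norm (f x) \<le> norm B" using assms(3) by eventually_elim auto
qed

lemma emp_support:
  assumes conv: "empirical_weak_conv a M" and sets: "sets M = sets borel" and fin: "finite_measure M"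
    and bd: "\<forall>N i. a N i > 0 \<longrightarrow> a N i \<le> C"
  shows "AE x in M. 0 \<le> x \<and> x \<le> C"
proof -
  define f where "f = (\<lambda>x::real. min 1 (max 0 (-x) + max 0 (x - C)))"
  have cf: "continuous_on UNIV f" unfolding f_def by (intro continuous_intros)
  have f01: "0 \<le> f x \<and> f x \<le> 1" for x unfolding f_def by auto
  have bf: "bounded (range f)" unfolding bounded_real using f01 by (intro exI[of _ 1]) auto
  have lim: "((\<lambda>N. (\<Sum>i\<in>{i. a N i > 0}. f (a N i)) / real N) \<longlongrightarrow> integral\<^sup>L M f) sequentially"
    using conv cf bf unfolding empirical_weak_conv_def by blast
  have z: "(\<Sum>i\<in>{i. a N i > 0}. f (a N i)) = 0" for N
    by (rule sum.neutral) (use bd in \<open>auto simp: f_def\<close>)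
  have "integral\<^sup>L M f = 0"
    using lim unfolding z by (simp add: LIMSEQ_const_iff)
  moreover have mf: "f \<in> borel_measurable M"
    using borel_measurable_continuous_onI[OF cf] measurable_cong_sets[OF sets refl] by auto
  moreover have "integrable M f"
    by (rule int_bounded_fin[OF fin mf, of 1]) (use f01 in auto)
  ultimately have "AE x in M. f x = 0"
    using integral_nonneg_eq_0_iff_AE[of M f] f01 by auto
  then show ?thesis
  proof eventually_elim
    case (elim x)
    then have "max 0 (-x) + max 0 (x - C) = 0" unfolding f_def by (auto simp: min_def split: if_splits)
    then show ?case by (auto simp: max_def split: if_splits)
  qed
qed

lemma space_M: "sets M = sets borel \<Longrightarrow> space M = UNIV"
  using sets_eq_imp_space_eq by fastforce

lemma ct_term:
  assumes sets: "sets M = sets borel" and fin: "finite_measure M" and w: "Im w \<noteq> 0"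
  shows "a * (cauchy_transform M w / b + total_mass M * c)
       = integral\<^sup>L M (\<lambda>x. a * (1 / (w - of_real x) / b + c))"
proof -
  have idm: "(\<lambda>x::real. x) \<in> borel_measurable M" by (rule measurable_ident_sets[OF sets])
  have meas: "(\<lambda>x. 1 / (w - complex_of_real x)) \<in> borel_measurable M"
    using idm by measurable
  have bnd: "norm (1 / (w - complex_of_real x)) \<le> 1 / \<bar>Im w\<bar>" for x
  proof -
    have "\<bar>Im w\<bar> \<le> cmod (w - complex_of_real x)" using abs_Im_le_cmod[of "w - of_real x"] by simp
    then show ?thesis using w by (simp add: norm_divide frac_le)
  qed
  have int: "integrable M (\<lambda>x. 1 / (w - complex_of_real x))"
    by (rule int_bounded_fin[OF fin meas, of "1 / \<bar>Im w\<bar>"]) (use bnd in auto)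
  have int2: "integrable M (\<lambda>x. 1 / (w - complex_of_real x) / b)" by (rule integrable_divide[OF int])
  have c: "integrable M (\<lambda>x. c)" using finite_measure.integrable_const[OF fin] .
  have "integral\<^sup>L M (\<lambda>x. a * (1 / (w - of_real x) / b + c))
      = a * (integral\<^sup>L M (\<lambda>x. 1 / (w - of_real x)) / b + integral\<^sup>L M (\<lambda>x. c))"
    unfolding integral_mult_right_zero Bochner_Integration.integral_add[OF int2 c] integral_divide_zero ..
  also have "integral\<^sup>L M (\<lambda>x. c) = total_mass M * c"
    by (simp add: total_mass_def space_M[OF sets] scaleR_conv_of_real)
  finally show ?thesis unfolding cauchy_transform_def by (rule sym)
qed



lemma pt_gen:
  fixes t A k :: complex
  assumes t0: "t \<noteq> 0" and A0: "A \<noteq> 0" and t1: "1 + t \<noteq> 0"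
  shows "1 / (A / t) / t^2 = 1 / (t * A)" "1 / (- A / t) / (- (t^2)) = 1 / (t * A)"
    "1 / (- A / t) / t^2 = - 1 / (t * A)" "1 / (A / t) / (- (t^2)) = - 1 / (t * A)"
  using t0 A0 by (simp_all add: field_simps power2_eq_square)

lemma pts:
  fixes x :: real and t :: complex
  assumes t: "Im t > 0"
  shows "(1+t)*(1/(1/t - of_real x)/t^2 + -1/t) = mob x x (-x) t"
    and "(1+t)*(1/(-1/t - of_real x)/t^2 + 1/t) = mob x x x t"
    and "(1+t)*(1/(-((1+t)/t) - of_real x)/(- (t^2)) + -1/(t*(1+t))) = mob 0 (-x) (1+x) t"
    and "(1+t)*(1/((1+t)/t - of_real x)/(- (t^2)) + 1/(t*(1+t))) = mob 0 (-x) (1-x) t"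
proof -
  have t0: "t \<noteq> 0" using t by auto
  have t1: "1 + t \<noteq> 0"
  proof
    assume "1 + t = 0" then have "Im (1 + t) = 0" by simp
    with t show False by simp
  qed
  have tt1: "t * (1 + t) \<noteq> 0" using t0 t1 by simp
  have "t + t * t = t * (1 + t)" by (simp add: algebra_simps)
  then have tt: "t * (1 + t) \<noteq> 0" "t + t * t \<noteq> 0" using tt1 by auto
  define A1 where "A1 = 1 + complex_of_real (-x) * t"
  define A2 where "A2 = 1 + complex_of_real x * t"
  define A3 where "A3 = 1 + complex_of_real (1+x) * t"
  define A4 where "A4 = 1 + complex_of_real (1-x) * t"
  have n1: "A1 \<noteq> 0" "A2 \<noteq> 0" "A3 \<noteq> 0" "A4 \<noteq> 0"
    unfolding A1_def A2_def A3_def A4_def using mob_den_nz t by (auto simp del: of_real_minus of_real_add of_real_diff)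
  have e1: "1/t - of_real x = A1 / t" using t0 by (simp add: field_simps A1_def)
  have e2: "-1/t - of_real x = - A2 / t" using t0 by (simp add: field_simps A2_def)
  have e3: "-((1+t)/t) - of_real x = - A3 / t" using t0 by (simp add: field_simps A3_def)
  have e4: "(1+t)/t - of_real x = A4 / t" using t0 by (simp add: field_simps A4_def)
  have m1: "mob x x (-x) t = (of_real x * t + of_real x) / A1" by (simp add: mob_def A1_def)
  have m2: "mob x x x t = (of_real x * t + of_real x) / A2" by (simp add: mob_def A2_def)
  have m3: "mob 0 (-x) (1+x) t = - of_real x / A3" by (simp add: mob_def A3_def)
  have m4: "mob 0 (-x) (1-x) t = - of_real x / A4" by (simp add: mob_def A4_def)
  have r1: "A1 - 1 = - of_real x * t" "A2 - 1 = of_real x * t" "A3 - 1 - t = of_real x * t" "A4 - 1 - t = - of_real x * t"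
    by (simp_all add: A1_def A2_def A3_def A4_def algebra_simps)
  have r0: "1 - A1 = of_real x * t" by (simp add: A1_def)
  show "(1+t)*(1/(1/t - of_real x)/t^2 + -1/t) = mob x x (-x) t"
  proof -
    have "(1+t)*(1/(t*A1) + -1/t) = (1+t) * (1 - A1) / (t * A1)" using t0 n1 by (simp add: field_simps)
    also have "\<dots> = (of_real x * t + of_real x) / A1" unfolding r0
      using t0 n1 by (simp add: field_simps)
    finally show ?thesis unfolding e1 pt_gen[OF t0 n1(1) t1] m1 .
  qed
  show "(1+t)*(1/(-1/t - of_real x)/t^2 + 1/t) = mob x x x t"
  proof -
    have "(1+t)*(-1/(t*A2) + 1/t) = (1+t) * (A2 - 1) / (t * A2)" using t0 n1 by (simp add: field_simps)
    also have "\<dots> = (of_real x * t + of_real x) / A2" unfolding r1 using t0 n1 by (simp add: field_simps)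
    finally show ?thesis unfolding e2 pt_gen[OF t0 n1(2) t1] m2 .
  qed
  show "(1+t)*(1/(-((1+t)/t) - of_real x)/(- (t^2)) + -1/(t*(1+t))) = mob 0 (-x) (1+x) t"
  proof -
    have q: "(1+t) * (-1/(t*(1+t))) = -1/t" using t1 t0 tt by (simp add: field_simps)
    have "(1+t)*(1/(t*A3) + -1/(t*(1+t))) = (1+t)*(1/(t*A3)) + (1+t) * (-1/(t*(1+t)))" by (rule distrib_left)
    also have "\<dots> = (1+t)/(t*A3) + -1/t" unfolding q by simp
    also have "\<dots> = (1 + t - A3) / (t * A3)" using t0 n1 by (simp add: field_simps)
    also have "1 + t - A3 = - of_real x * t" using r1(3) by (simp add: algebra_simps)
    also have "- of_real x * t / (t * A3) = - of_real x / A3" using t0 by simp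
    finally show ?thesis unfolding e3 pt_gen[OF t0 n1(3) t1] m3 .
  qed
  show "(1+t)*(1/((1+t)/t - of_real x)/(- (t^2)) + 1/(t*(1+t))) = mob 0 (-x) (1-x) t"
  proof -
    have q: "(1+t) * (1/(t*(1+t))) = 1/t" using t1 t0 tt by (simp add: field_simps)
    have "(1+t)*(-1/(t*A4) + 1/(t*(1+t))) = (1+t)*(-1/(t*A4)) + (1+t) * (1/(t*(1+t)))" by (rule distrib_left)
    also have "\<dots> = - ((1+t)/(t*A4)) + 1/t" unfolding q by simp
    also have "\<dots> = (A4 - 1 - t) / (t * A4)" using t0 n1 by (simp add: field_simps)
    also have "\<dots> = - of_real x / A4" unfolding r1 using t0 by simp
    finally show ?thesis unfolding e4 pt_gen[OF t0 n1(4) t1] m4 .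
  qed
qed


lemma G_decomp:
  assumes sA: "sets Ap = sets borel" "finite_measure Ap" and sB: "sets Bp = sets borel" "finite_measure Bp"
    and sAm: "sets Am = sets borel" "finite_measure Am" and sBm: "sets Bm = sets borel" "finite_measure Bm"
    and t: "Im t > 0"
  shows "(1 + t) * F_shift Ap Am Bp Bm Gp Gm t = mob Gp Gp 0 t + mob 0 (-Gm) 1 t
     + integral\<^sup>L Ap (\<lambda>x. mob x x (-x) t) + integral\<^sup>L Bp (\<lambda>x. mob x x x t)
     + integral\<^sup>L Am (\<lambda>x. mob 0 (-x) (1+x) t) + integral\<^sup>L Bm (\<lambda>x. mob 0 (-x) (1-x) t)"
proof -
  have t0: "t \<noteq> 0" using t by auto
  have t1: "1 + t \<noteq> 0"
  proof
    assume "1 + t = 0" then have "Im (1 + t) = 0" by simp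
    with t show False by simp
  qed
  have i1: "Im (1/t) \<noteq> 0" using t by (simp add: Im_divide)
  have i2: "Im (-1/t) \<noteq> 0" using t by (simp add: Im_divide)
  have i3: "Im (-((1+t)/t)) \<noteq> 0" using t t0 by (simp add: Im_divide add_divide_distrib)
  have i4: "Im ((1+t)/t) \<noteq> 0" using t t0 by (simp add: Im_divide add_divide_distrib)
  have exp: "(1 + t) * F_shift Ap Am Bp Bm Gp Gm t
    = (1+t)*(cauchy_transform Ap (1/t)/t^2 + total_mass Ap * (-1/t))
    + (1+t)*(cauchy_transform Bp (-1/t)/t^2 + total_mass Bp * (1/t))
    + (1+t)*(cauchy_transform Am (-((1+t)/t))/(- (t^2)) + total_mass Am * (-1/(t*(1+t))))
    + (1+t)*(cauchy_transform Bm ((1+t)/t)/(- (t^2)) + total_mass Bm * (1/(t*(1+t))))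
    + (1+t) * complex_of_real Gp - (1+t) * complex_of_real Gm / (1+t)^2"
    unfolding F_shift_def by (simp add: algebra_simps)
  have a1: "(1+t)*(cauchy_transform Ap (1/t)/t^2 + total_mass Ap * (-1/t)) = integral\<^sup>L Ap (\<lambda>x. mob x x (-x) t)"
    unfolding ct_term[OF sA i1] using pts(1)[OF t] by simp
  have a2: "(1+t)*(cauchy_transform Bp (-1/t)/t^2 + total_mass Bp * (1/t)) = integral\<^sup>L Bp (\<lambda>x. mob x x x t)"
    unfolding ct_term[OF sB i2] using pts(2)[OF t] by simp
  have a3: "(1+t)*(cauchy_transform Am (-((1+t)/t))/(- (t^2)) + total_mass Am * (-1/(t*(1+t))))
      = integral\<^sup>L Am (\<lambda>x. mob 0 (-x) (1+x) t)"
    unfolding ct_term[OF sAm i3] using pts(3)[OF t] by simp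
  have a4: "(1+t)*(cauchy_transform Bm ((1+t)/t)/(- (t^2)) + total_mass Bm * (1/(t*(1+t))))
      = integral\<^sup>L Bm (\<lambda>x. mob 0 (-x) (1-x) t)"
    unfolding ct_term[OF sBm i4] using pts(4)[OF t] by simp
  have a5: "(1+t) * complex_of_real Gp = mob Gp Gp 0 t" by (simp add: mob_def algebra_simps)
  have a6: "(1+t) * complex_of_real Gm / (1+t)^2 = - mob 0 (-Gm) 1 t"
  proof -
    have "(1+t) * complex_of_real Gm / (1+t)^2 = complex_of_real Gm / (1+t)" using t1 by (simp add: power2_eq_square)
    moreover have "mob 0 (-Gm) 1 t = - (complex_of_real Gm / (1+t))" by (simp add: mob_def)
    ultimately show ?thesis by simp
  qed
  show ?thesis unfolding exp a1 a2 a3 a4 a5 a6 by (simp add: algebra_simps)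
qed




definition mobd :: "real \<Rightarrow> real \<Rightarrow> real \<Rightarrow> complex \<Rightarrow> complex" where
  "mobd a b g z = of_real (a - b*g) / (1 + of_real g * z)^2"

lemma mob_deriv:
  assumes "Im z \<noteq> 0"
  shows "(mob a b g has_field_derivative mobd a b g z) (at z)"
proof -
  have d: "1 + complex_of_real g * z \<noteq> 0" using mob_den_nz assms by auto
  have f: "((\<lambda>z. of_real a * z + of_real b) has_field_derivative of_real a) (at z)"
    by (auto intro!: derivative_eq_intros)
  have g: "((\<lambda>z. 1 + of_real g * z) has_field_derivative of_real g) (at z)"
    by (auto intro!: derivative_eq_intros)
  have "(mob a b g has_field_derivative
     (of_real a * (1 + of_real g * z) - (of_real a * z + of_real b) * of_real g) / ((1 + of_real g * z) * (1 + of_real g * z))) (at z)"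
    unfolding mob_def using DERIV_divide[OF f g d] .
  moreover have "(of_real a * (1 + of_real g * z) - (of_real a * z + of_real b) * of_real g) / ((1 + of_real g * z) * (1 + of_real g * z))
     = mobd a b g z"
    unfolding mobd_def by (simp add: power2_eq_square algebra_simps)
  ultimately show ?thesis by simp
qed

lemma cont_real: "continuous_on (UNIV::real set) (\<lambda>x. -x)" "continuous_on (UNIV::real set) (\<lambda>x. 1 + x)"
   "continuous_on (UNIV::real set) (\<lambda>x. 1 - x)" "continuous_on (UNIV::real set) (\<lambda>x. x)" "continuous_on (UNIV::real set) (\<lambda>x. 0)"
  using continuous_on_minus[OF continuous_on_id, of "UNIV::real set"]
    continuous_on_add[OF continuous_on_const continuous_on_id, of "UNIV::real set" 1]
    continuous_on_diff[OF continuous_on_const continuous_on_id, of "UNIV::real set" 1]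
  by (auto simp: id_def)

locale mainloc =
  fixes Ap Am Bp Bm :: "real measure" and Gp Gm C :: real
  assumes sAp: "sets Ap = sets borel" "finite_measure Ap"
    and sAm: "sets Am = sets borel" "finite_measure Am"
    and sBp: "sets Bp = sets borel" "finite_measure Bp"
    and sBm: "sets Bm = sets borel" "finite_measure Bm"
    and suppAp: "AE x in Ap. 0 \<le> x \<and> x \<le> C"
    and suppAm: "AE x in Am. 0 \<le> x \<and> x \<le> C"
    and suppBp: "AE x in Bp. 0 \<le> x \<and> x \<le> 1"
    and suppBm: "AE x in Bm. 0 \<le> x \<and> x \<le> 1"
    and Gp: "Gp > 0" and Gm: "Gm \<ge> 0"
begin

sublocale mA: mobfam Ap "\<lambda>x. x" "\<lambda>x. x" "\<lambda>x. -x" "\<bar>C\<bar> + 2"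
proof (rule mobfam.intro)
  show "sets Ap = sets borel" "finite_measure Ap" using sAp by auto
  show "continuous_on (UNIV::real set) (\<lambda>x. x)" "continuous_on (UNIV::real set) (\<lambda>x. x)" "continuous_on (UNIV::real set) (\<lambda>x. -x)"
    using cont_real by auto
  show "AE x in Ap. \<bar>(\<lambda>x. x) x\<bar> \<le> \<bar>C\<bar> + 2 \<and> \<bar>(\<lambda>x. x) x\<bar> \<le> \<bar>C\<bar> + 2 \<and> \<bar>(\<lambda>x. -x) x\<bar> \<le> \<bar>C\<bar> + 2"
    using suppAp by eventually_elim auto
qed
sublocale mAm: mobfam Am "\<lambda>x. 0" "\<lambda>x. -x" "\<lambda>x. 1 + x" "\<bar>C\<bar> + 2"
proof (rule mobfam.intro)
  show "sets Am = sets borel" "finite_measure Am" using sAm by auto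
  show "continuous_on (UNIV::real set) (\<lambda>x. 0)" "continuous_on (UNIV::real set) (\<lambda>x. -x)" "continuous_on (UNIV::real set) (\<lambda>x. 1 + x)"
    using cont_real by auto
  show "AE x in Am. \<bar>(\<lambda>x. 0) x\<bar> \<le> \<bar>C\<bar> + 2 \<and> \<bar>(\<lambda>x. -x) x\<bar> \<le> \<bar>C\<bar> + 2 \<and> \<bar>(\<lambda>x. 1 + x) x\<bar> \<le> \<bar>C\<bar> + 2"
    using suppAm by eventually_elim auto
qed
sublocale mBp: mobfam Bp "\<lambda>x. x" "\<lambda>x. x" "\<lambda>x. x" "\<bar>C\<bar> + 2"
proof (rule mobfam.intro)
  show "sets Bp = sets borel" "finite_measure Bp" using sBp by auto
  show "continuous_on (UNIV::real set) (\<lambda>x. x)" "continuous_on (UNIV::real set) (\<lambda>x. x)" "continuous_on (UNIV::real set) (\<lambda>x. x)"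
    using cont_real by auto
  show "AE x in Bp. \<bar>(\<lambda>x. x) x\<bar> \<le> \<bar>C\<bar> + 2 \<and> \<bar>(\<lambda>x. x) x\<bar> \<le> \<bar>C\<bar> + 2 \<and> \<bar>(\<lambda>x. x) x\<bar> \<le> \<bar>C\<bar> + 2"
    using suppBp by eventually_elim auto
qed
sublocale mBm: mobfam Bm "\<lambda>x. 0" "\<lambda>x. -x" "\<lambda>x. 1 - x" "\<bar>C\<bar> + 2"
proof (rule mobfam.intro)
  show "sets Bm = sets borel" "finite_measure Bm" using sBm by auto
  show "continuous_on (UNIV::real set) (\<lambda>x. 0)" "continuous_on (UNIV::real set) (\<lambda>x. -x)" "continuous_on (UNIV::real set) (\<lambda>x. 1 - x)"
    using cont_real by auto
  show "AE x in Bm. \<bar>(\<lambda>x. 0) x\<bar> \<le> \<bar>C\<bar> + 2 \<and> \<bar>(\<lambda>x. -x) x\<bar> \<le> \<bar>C\<bar> + 2 \<and> \<bar>(\<lambda>x. 1 - x) x\<bar> \<le> \<bar>C\<bar> + 2"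
    using suppBm by eventually_elim auto
qed

definition G :: "complex \<Rightarrow> complex" where "G z = (1 + z) * F_shift Ap Am Bp Bm Gp Gm z"
definition R :: "complex \<Rightarrow> complex" where "R z = mob 0 (-Gm) 1 z + mA.I z + mBp.I z + mAm.I z + mBm.I z"
definition R' :: "complex \<Rightarrow> complex" where "R' z = mobd 0 (-Gm) 1 z + mA.I' z + mBp.I' z + mAm.I' z + mBm.I' z"

lemma kA: "AE x in Ap. x - x * - x \<ge> 0" using suppAp by eventually_elim auto
lemma kAm: "AE x in Am. 0 - - x * (1 + x) \<ge> 0" using suppAm by eventually_elim auto
lemma kBp: "AE x in Bp. x - x * x \<ge> 0" using suppBp by eventually_elim (auto intro: mult_left_le_one_le)
lemma kBm: "AE x in Bm. 0 - - x * (1 - x) \<ge> 0" using suppBm by eventually_elim auto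

lemma G_eq: "Im z > 0 \<Longrightarrow> G z = mob Gp Gp 0 z + R z"
  unfolding G_def R_def mA.I_def mAm.I_def mBp.I_def mBm.I_def
  using G_decomp[OF sAp sBp sAm sBm, of z Gp Gm] by (simp add: add_ac)


lemma R_deriv: assumes z: "Im z > 0" shows "(R has_field_derivative R' z) (at z)"
proof -
  have "((\<lambda>z. mob 0 (-Gm) 1 z + mA.I z + mBp.I z + mAm.I z + mBm.I z) has_field_derivative
     (mobd 0 (-Gm) 1 z + mA.I' z + mBp.I' z + mAm.I' z + mBm.I' z)) (at z)"
    using z by (intro DERIV_add mob_deriv mA.has_deriv_I mBp.has_deriv_I mAm.has_deriv_I mBm.has_deriv_I) auto
  then show ?thesis unfolding R_def[abs_def] R'_def .
qed

lemma G_deriv: assumes z: "Im z > 0" shows "(G has_field_derivative (mobd Gp Gp 0 z + R' z)) (at z)"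
proof -
  have "((\<lambda>z. mob Gp Gp 0 z + R z) has_field_derivative (mobd Gp Gp 0 z + R' z)) (at z)"
    using z by (intro DERIV_add mob_deriv R_deriv) auto
  then show ?thesis
    by (rule has_field_derivative_transform_within_open[OF _ open_UH]) (use z G_eq in \<open>auto simp: UH_def\<close>)
qed

lemma G_hol: "G holomorphic_on UH"
  unfolding holomorphic_on_open[OF open_UH] using G_deriv by (auto simp: UH_def)

lemma Im_G: assumes z: "Im z > 0" shows "Im (G z) \<ge> Gp * Im z"
proof -
  have "Im (mob Gp Gp 0 z) = Gp * Im z" using mob_Im[OF z] by simp
  moreover have "Im (mob 0 (-Gm) 1 z) \<ge> 0" using mob_Im[OF z, of 0 "-Gm" 1] Gm z by simp
  moreover have "Im (mA.I z) \<ge> 0" "Im (mBp.I z) \<ge> 0" "Im (mAm.I z) \<ge> 0" "Im (mBm.I z) \<ge> 0"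
    using mA.Im_I[OF z kA] mBp.Im_I[OF z kBp] mAm.Im_I[OF z kAm] mBm.Im_I[OF z kBm] by auto
  ultimately show ?thesis unfolding G_eq[OF z] R_def by simp
qed

lemma s2_G: assumes z: "Im z1 > 0" "Im z2 > 0" shows "s2 z1 z2 (G z1) (G z2) \<ge> Gp * (cmod (z1 - z2))^2"
proof -
  have "s2 z1 z2 (mob Gp Gp 0 z1) (mob Gp Gp 0 z2) = Gp * (cmod (z1 - z2))^2" using s2_mob[OF z] by simp
  moreover have "s2 z1 z2 (mob 0 (-Gm) 1 z1) (mob 0 (-Gm) 1 z2) \<ge> 0" using s2_mob[OF z, of 0 "-Gm" 1] Gm by simp
  moreover have "s2 z1 z2 (mA.I z1) (mA.I z2) \<ge> 0" "s2 z1 z2 (mBp.I z1) (mBp.I z2) \<ge> 0"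
     "s2 z1 z2 (mAm.I z1) (mAm.I z2) \<ge> 0" "s2 z1 z2 (mBm.I z1) (mBm.I z2) \<ge> 0"
    using mA.s2_I[OF z kA] mBp.s2_I[OF z kBp] mAm.s2_I[OF z kAm] mBm.s2_I[OF z kBm] by auto
  ultimately show ?thesis unfolding G_eq[OF z(1)] G_eq[OF z(2)] R_def s2_add by simp
qed

lemma e1_G: assumes z: "Im z > 0" shows "e1 z (G z) (mobd Gp Gp 0 z + R' z) \<ge> Gp"
proof -
  have "e1 z (mob Gp Gp 0 z) (mobd Gp Gp 0 z) = Gp" using e1_mob[OF z, of Gp Gp 0] by (simp add: mobd_def)
  moreover have "e1 z (mob 0 (-Gm) 1 z) (mobd 0 (-Gm) 1 z) \<ge> 0" using e1_mob[OF z, of 0 "-Gm" 1] Gm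
    by (simp add: mobd_def del: of_real_minus)
  moreover have "e1 z (mA.I z) (mA.I' z) \<ge> 0" "e1 z (mBp.I z) (mBp.I' z) \<ge> 0"
     "e1 z (mAm.I z) (mAm.I' z) \<ge> 0" "e1 z (mBm.I z) (mBm.I' z) \<ge> 0"
    using mA.e1_I[OF z kA] mBp.e1_I[OF z kBp] mAm.e1_I[OF z kAm] mBm.e1_I[OF z kBm] by auto
  ultimately show ?thesis unfolding G_eq[OF z] R_def R'_def e1_add by simp
qed


definition Et :: "complex \<Rightarrow> real" where "Et z = Im (G z) * (cmod z)^2 / Im z"
definition q2 :: "complex \<Rightarrow> complex" where "q2 z = of_real (Et z)"
definition q1 :: "complex \<Rightarrow> complex" where "q1 z = q2 z * (1/z + 1) + G z"
definition Phi :: "complex \<Rightarrow> real \<times> real" where "Phi z = (Re (q1 z), Re (q2 z))"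

lemma Im_inv: "Im (1/z) = - Im z / (cmod z)^2"
  by (simp add: Im_divide cmod_power2)

lemma Et_pos: assumes z: "Im z > 0" shows "Et z > 0"
proof -
  have "Im (G z) > 0" using Im_G[OF z] Gp z by (meson mult_pos_pos order_less_le_trans)
  moreover have "cmod z > 0" using z by auto
  ultimately show ?thesis unfolding Et_def using z by simp
qed

lemma Im_q1: assumes z: "Im z > 0" shows "Im (q1 z) = 0"
proof -
  have c: "(cmod z)^2 > 0" using z by auto
  have "Im (q1 z) = Et z * Im (1/z) + Im (G z)" unfolding q1_def q2_def by simp
  also have "\<dots> = 0" unfolding Im_inv Et_def using c z by (simp add: field_simps)
  finally show ?thesis .
qed

lemma q1_real: "Im z > 0 \<Longrightarrow> q1 z = of_real (Re (q1 z))"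
  using Im_q1 by (simp add: complex_eq_iff)

lemma root_iff:
  assumes z: "Im z > 0" and eta: "eta > 0"
  shows "(1 / z + 1 + (1 + z) * F_shift Ap Am Bp Bm Gp Gm z / complex_of_real eta = complex_of_real y / complex_of_real eta)
     \<longleftrightarrow> Phi z = (y, eta)"
proof -
  have e0: "complex_of_real eta \<noteq> 0" using eta by simp
  have "(1 / z + 1 + (1 + z) * F_shift Ap Am Bp Bm Gp Gm z / complex_of_real eta = complex_of_real y / complex_of_real eta)
     \<longleftrightarrow> (of_real eta * (1/z + 1) + G z = of_real y)"
    unfolding G_def[symmetric] using e0 by (simp add: field_simps)
  also have "\<dots> \<longleftrightarrow> Phi z = (y, eta)"
  proof
    assume h: "of_real eta * (1/z + 1) + G z = of_real y"
    then have "Im (of_real eta * (1/z + 1) + G z) = 0" by simp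
    then have "eta * Im (1/z) + Im (G z) = 0" by simp
    then have "eta * (Im z / (cmod z)^2) = Im (G z)" unfolding Im_inv by simp
    moreover have "(cmod z)^2 > 0" using z by auto
    ultimately have et: "Et z = eta" unfolding Et_def using z by (simp add: field_simps)
    then have "q1 z = of_real y" unfolding q1_def q2_def using h by simp
    then show "Phi z = (y, eta)" unfolding Phi_def q2_def using et by simp
  next
    assume "Phi z = (y, eta)"
    then have et: "Et z = eta" and y: "Re (q1 z) = y" unfolding Phi_def q2_def by auto
    have "q1 z = of_real y" using q1_real[OF z] y by simp
    then show "of_real eta * (1/z + 1) + G z = of_real y" unfolding q1_def q2_def et .
  qed
  finally show ?thesis .
qed

lemma Phi_inj: "inj_on Phi UH"
proof (rule inj_onI)
  fix z1 z2 assume z: "z1 \<in> UH" "z2 \<in> UH" and eq: "Phi z1 = Phi z2"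
  have z1: "Im z1 > 0" and z2: "Im z2 > 0" using z by (auto simp: UH_def)
  define y where "y = Re (q1 z1)"
  define eta where "eta = Et z1"
  have e2: "Et z2 = eta" "Re (q1 z2) = y" using eq unfolding Phi_def q2_def eta_def y_def by auto
  have Gz: "G z = of_real (y - eta) - of_real eta / z" if "z \<in> {z1, z2}" for z
  proof -
    have zz: "Im z > 0" "Et z = eta" "Re (q1 z) = y" using that z1 z2 e2 by (auto simp: eta_def y_def)
    have "q1 z = of_real y" using q1_real[OF zz(1)] zz(3) by simp
    then have "of_real eta * (1/z + 1) + G z = of_real y" unfolding q1_def q2_def zz(2) .
    then show ?thesis by (simp add: algebra_simps diff_divide_distrib)
  qed
  have g1: "G z1 = of_real (y - eta) - of_real eta / z1" by (rule Gz) simp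
  have g2: "G z2 = of_real (y - eta) - of_real eta / z2" by (rule Gz) simp
  have "s2 z1 z2 (G z1) (G z2) = 0" unfolding g1 g2 by (rule s2_m[OF z1 z2])
  moreover have "s2 z1 z2 (G z1) (G z2) \<ge> Gp * (cmod (z1 - z2))^2" by (rule s2_G[OF z1 z2])
  ultimately have "Gp * (cmod (z1 - z2))^2 \<le> 0" by simp
  then have "(cmod (z1 - z2))^2 \<le> 0" using Gp by (simp add: mult_le_0_iff)
  then show "z1 = z2" by simp
qed

lemma mc_G: "mc UH G" by (rule mc.hol[OF G_hol])

lemma mc_q2: "mc UH q2"
proof -
  have "q2 = (\<lambda>z. of_real (Im (G z)) * (z * cnj z) * inverse (of_real (Im z)))"
  proof (rule ext)
    fix z
    have "q2 z = of_real (Im (G z)) * of_real ((cmod z)^2) * inverse (of_real (Im z))"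
      unfolding q2_def Et_def by (simp only: of_real_mult of_real_divide divide_inverse of_real_inverse)
    then show "q2 z = of_real (Im (G z)) * (z * cnj z) * inverse (of_real (Im z))"
      by (simp only: complex_norm_square)
  qed
  moreover have "mc UH (\<lambda>z. of_real (Im (G z)) * (z * cnj z) * inverse (of_real (Im z)))"
    by (intro mc.mul mc_Im mc_G mc_id mc_cnj mc.inv) (auto simp: UH_def)
  ultimately show ?thesis by simp
qed

lemma mc_q1: "mc UH q1"
proof -
  have "q1 = (\<lambda>z. q2 z * (inverse z + 1) + G z)" by (auto simp: fun_eq_iff q1_def divide_inverse)
  moreover have "mc UH (\<lambda>z. q2 z * (inverse z + 1) + G z)"
    by (intro mc.add mc.mul mc_q2 mc.inv mc_id mc_const mc_G) (auto simp: UH_def)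
  ultimately show ?thesis by simp
qed

end



context mainloc begin

definition A' :: "complex \<Rightarrow> complex \<Rightarrow> complex" where
  "A' = (SOME f'. (\<forall>v. mc UH (f' v)) \<and> (\<forall>z\<in>UH. (q1 has_derivative (\<lambda>v. f' v z)) (at z)))"
definition B' :: "complex \<Rightarrow> complex \<Rightarrow> complex" where
  "B' = (SOME f'. (\<forall>v. mc UH (f' v)) \<and> (\<forall>z\<in>UH. (q2 has_derivative (\<lambda>v. f' v z)) (at z)))"

lemma A'_props: "\<forall>v. mc UH (A' v)" "\<forall>z\<in>UH. (q1 has_derivative (\<lambda>v. A' v z)) (at z)"
  using someI_ex[OF mc_deriv[OF open_UH mc_q1]] unfolding A'_def by blast+
lemma B'_props: "\<forall>v. mc UH (B' v)" "\<forall>z\<in>UH. (q2 has_derivative (\<lambda>v. B' v z)) (at z)"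
  using someI_ex[OF mc_deriv[OF open_UH mc_q2]] unfolding B'_def by blast+

lemma Im_A'0: assumes z: "z \<in> UH" shows "Im (A' u z) = 0"
proof -
  have d1: "((\<lambda>z. Im (q1 z)) has_derivative (\<lambda>v. Im (A' v z))) (at z)"
    using A'_props(2) z by (intro has_derivative_Im) auto
  have "((\<lambda>z. 0::real) has_derivative (\<lambda>v. 0)) (at z)" by simp
  then have d2: "((\<lambda>z. Im (q1 z)) has_derivative (\<lambda>v. 0)) (at z)"
    by (rule has_derivative_transform_within_open[OF _ open_UH z]) (use Im_q1 in \<open>auto simp: UH_def\<close>)
  have "(\<lambda>v. Im (A' v z)) = (\<lambda>v. 0)" by (rule has_derivative_unique[OF d1 d2])
  then show ?thesis by (metis)
qed

lemma Im_B'0: assumes z: "z \<in> UH" shows "Im (B' u z) = 0"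
proof -
  have d1: "((\<lambda>z. Im (q2 z)) has_derivative (\<lambda>v. Im (B' v z))) (at z)"
    using B'_props(2) z by (intro has_derivative_Im) auto
  have "(\<lambda>z. Im (q2 z)) = (\<lambda>z. 0)" by (simp add: q2_def fun_eq_iff)
  then have d2: "((\<lambda>z. Im (q2 z)) has_derivative (\<lambda>v. 0)) (at z)" by simp
  have "(\<lambda>v. Im (B' v z)) = (\<lambda>v. 0)" by (rule has_derivative_unique[OF d1 d2])
  then show ?thesis by (metis)
qed

lemma kernel0:
  assumes z: "z \<in> UH" and h: "Re (A' u z) = 0" "Re (B' u z) = 0"
  shows "u = 0"
proof (rule ccontr)
  assume u0: "u \<noteq> 0"
  have zi: "Im z > 0" using z by (simp add: UH_def)
  have z0: "z \<noteq> 0" using zi by auto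
  have a0: "A' u z = 0" using h Im_A'0[OF z] by (simp add: complex_eq_iff)
  have b0: "B' u z = 0" using h Im_B'0[OF z] by (simp add: complex_eq_iff)
  define G' where "G' = mobd Gp Gp 0 z + R' z"
  have Gd: "(G has_derivative (\<lambda>v. G' * v)) (at z)"
    using G_deriv[OF zi] unfolding G'_def has_field_derivative_def .
  have q1eq: "q1 = (\<lambda>z. q2 z * (inverse z + 1) + G z)" by (auto simp: fun_eq_iff q1_def divide_inverse)
  have d2: "(q1 has_derivative (\<lambda>v. q2 z * (- (inverse z * v * inverse z) + 0) + B' v z * (inverse z + 1) + G' * v)) (at z)"
    unfolding q1eq
    by (intro has_derivative_add has_derivative_mult Gd B'_props(2)[rule_format, OF z] Deriv.has_derivative_inverse
        has_derivative_ident has_derivative_const z0)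
  have "(\<lambda>v. A' v z) = (\<lambda>v. q2 z * (- (inverse z * v * inverse z) + 0) + B' v z * (inverse z + 1) + G' * v)"
    by (rule has_derivative_unique[OF A'_props(2)[rule_format, OF z] d2])
  then have "A' u z = q2 z * (- (inverse z * u * inverse z) + 0) + B' u z * (inverse z + 1) + G' * u" by metis
  then have "0 = u * (G' - q2 z / z^2)" unfolding a0 b0 by (simp add: field_simps power2_eq_square)
  then have G'eq: "G' = of_real (Et z) / z^2" using u0 by (simp add: q2_def)
  define y where "y = Re (q1 z)"
  have "q1 z = of_real y" using q1_real[OF zi] by (simp add: y_def)
  then have "G z = of_real (y - Et z) - of_real (Et z) / z" unfolding q1_def q2_def
    by (simp add: algebra_simps diff_divide_distrib)
  then have "e1 z (G z) G' = 0" unfolding G'eq by (simp only: e1_m[OF zi])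
  moreover have "e1 z (G z) G' \<ge> Gp" unfolding G'_def by (rule e1_G[OF zi])
  ultimately show False using Gp by simp
qed


definition a11 where "a11 z = Re (A' 1 z)"
definition a12 where "a12 z = Re (A' \<i> z)"
definition a21 where "a21 z = Re (B' 1 z)"
definition a22 where "a22 z = Re (B' \<i> z)"
definition det where "det z = a11 z * a22 z - a12 z * a21 z"

lemma A'_lin: assumes z: "z \<in> UH" shows "Re (A' u z) = Re u * a11 z + Im u * a12 z"
proof -
  have "bounded_linear (\<lambda>v. A' v z)" using A'_props(2) z has_derivative_bounded_linear by blast
  from lin_C[OF this, of u] show ?thesis by (simp add: a11_def a12_def)
qed

lemma B'_lin: assumes z: "z \<in> UH" shows "Re (B' u z) = Re u * a21 z + Im u * a22 z"
proof -
  have "bounded_linear (\<lambda>v. B' v z)" using B'_props(2) z has_derivative_bounded_linear by blast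
  from lin_C[OF this, of u] show ?thesis by (simp add: a21_def a22_def)
qed

lemma det_nz: assumes z: "z \<in> UH" shows "det z \<noteq> 0"
proof
  assume d: "det z = 0"
  have ker: "u = 0" if "Re u * a11 z + Im u * a12 z = 0" "Re u * a21 z + Im u * a22 z = 0" for u
    using kernel0[OF z] that A'_lin[OF z] B'_lin[OF z] by simp
  show False
  proof (cases "a11 z = 0 \<and> a12 z = 0")
    case False
    have "Complex (- a12 z) (a11 z) = 0" by (rule ker) (use d in \<open>auto simp: det_def algebra_simps\<close>)
    then show False using False by (simp add: complex_eq_iff)
  next
    case True
    show False
    proof (cases "a21 z = 0 \<and> a22 z = 0")
      case True2: True
      have "(1::complex) = 0" by (rule ker) (use True True2 in auto)
      then show False by simp
    next
      case False
      have "Complex (- a22 z) (a21 z) = 0" by (rule ker) (use True in \<open>auto simp: algebra_simps\<close>)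
      then show False using False by (simp add: complex_eq_iff)
    qed
  qed
qed

lemma Phi_deriv: assumes z: "z \<in> UH" shows "(Phi has_derivative (\<lambda>u. (Re (A' u z), Re (B' u z)))) (at z)"
proof -
  have "((\<lambda>z. (Re (q1 z), Re (q2 z))) has_derivative (\<lambda>u. (Re (A' u z), Re (B' u z)))) (at z)"
    by (intro has_derivative_Pair has_derivative_Re) (use A'_props(2) B'_props(2) z in blast)+
  then show ?thesis unfolding Phi_def[abs_def] .
qed

definition wv :: "real \<times> real \<Rightarrow> complex \<Rightarrow> complex" where
  "wv v z = Complex ((fst v * a22 z - snd v * a12 z) / det z) ((snd v * a11 z - fst v * a21 z) / det z)"

lemma w_inv: assumes z: "z \<in> UH" shows "(\<lambda>v. wv v z) \<circ> (\<lambda>u. (Re (A' u z), Re (B' u z))) = id"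
proof
  fix u
  have d: "det z \<noteq> 0" by (rule det_nz[OF z])
  show "((\<lambda>v. wv v z) \<circ> (\<lambda>u. (Re (A' u z), Re (B' u z)))) u = id u"
    unfolding o_def A'_lin[OF z] B'_lin[OF z] wv_def using d
    by (simp add: complex_eq_iff field_simps det_def)
qed

lemma w_lin: "bounded_linear (\<lambda>v. wv v z)"
proof -
  have "(\<lambda>v. wv v z) = (\<lambda>v. fst v *\<^sub>R Complex (a22 z / det z) (- a21 z / det z) + snd v *\<^sub>R Complex (- a12 z / det z) (a11 z / det z))"
    by (auto simp: fun_eq_iff wv_def complex_eq_iff diff_divide_distrib)
  moreover have "bounded_linear (\<lambda>v::real \<times> real. fst v *\<^sub>R Complex (a22 z / det z) (- a21 z / det z) + snd v *\<^sub>R Complex (- a12 z / det z) (a11 z / det z))"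
    by (intro bounded_linear_add bounded_linear_compose[OF bounded_linear_scaleR_left bounded_linear_fst]
          bounded_linear_compose[OF bounded_linear_scaleR_left bounded_linear_snd])
  ultimately show ?thesis by simp
qed

lemma w_mc: "mc UH (wv v)"
proof -
  define c11 where "c11 z = complex_of_real (Re (A' 1 z))" for z
  define c12 where "c12 z = complex_of_real (Re (A' \<i> z))" for z
  define c21 where "c21 z = complex_of_real (Re (B' 1 z))" for z
  define c22 where "c22 z = complex_of_real (Re (B' \<i> z))" for z
  have m: "mc UH c11" "mc UH c12" "mc UH c21" "mc UH c22"
    unfolding c11_def c12_def c21_def c22_def using A'_props(1) B'_props(1) by (auto intro!: mc_Re)
  have cd: "c11 z * c22 z - c12 z * c21 z = of_real (det z)" for z
    by (simp add: c11_def c12_def c21_def c22_def det_def a11_def a12_def a21_def a22_def)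
  have "wv v = (\<lambda>z. (of_real (fst v) * c22 z - of_real (snd v) * c12 z) / (c11 z * c22 z - c12 z * c21 z)
        + \<i> * ((of_real (snd v) * c11 z - of_real (fst v) * c21 z) / (c11 z * c22 z - c12 z * c21 z)))"
    unfolding cd by (auto simp: fun_eq_iff wv_def complex_eq_iff c11_def c12_def c21_def c22_def a11_def a12_def a21_def a22_def)
  moreover have "mc UH (\<lambda>z. (of_real (fst v) * c22 z - of_real (snd v) * c12 z) / (c11 z * c22 z - c12 z * c21 z)
        + \<i> * ((of_real (snd v) * c11 z - of_real (fst v) * c21 z) / (c11 z * c22 z - c12 z * c21 z)))"
    using det_nz unfolding cd[symmetric]
    by (intro mc.add mc.mul mc_divide mc_diff m mc_const) (auto simp: cd)
  ultimately show ?thesis by simp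
qed


lemma Phi_cont: "continuous_on UH Phi"
proof (rule continuous_at_imp_continuous_on, rule ballI)
  fix z assume "z \<in> UH"
  then show "isCont Phi z" using Phi_deriv has_derivative_continuous by blast
qed

lemma final:
  assumes fT: "\<forall>p\<in>Phi ` UH. fT p \<in> UH \<and> Phi (fT p) = p"
  shows "diffeomorphism_on (Phi ` UH) UH fT"
proof -
  have DIM: "DIM(real \<times> real) \<le> DIM(complex)" by simp
  have openD: "open (Phi ` UH)" by (rule invariance_of_domain_gen[OF open_UH Phi_cont Phi_inj DIM])
  have fPhi: "fT (Phi z) = z" if z: "z \<in> UH" for z
  proof -
    have "fT (Phi z) \<in> UH" "Phi (fT (Phi z)) = Phi z" using fT z by auto
    then show ?thesis using Phi_inj z by (meson inj_onD)
  qed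
  have contf: "continuous_on (Phi ` UH) fT"
    by (rule continuous_on_inverse_open[OF open_UH Phi_cont _ fPhi]) simp
  have injf: "inj_on fT (Phi ` UH)"
    by (rule inj_onI) (metis fT)
  have imf: "fT ` (Phi ` UH) = UH"
  proof
    show "fT ` Phi ` UH \<subseteq> UH" using fT by auto
    show "UH \<subseteq> fT ` Phi ` UH" using fPhi by (metis image_eqI subsetI)
  qed
  have bij: "bij_betw fT (Phi ` UH) UH" unfolding bij_betw_def using injf imf by blast
  have gd: "\<forall>p\<in>Phi ` UH. (fT has_derivative (\<lambda>v. wv v (fT p))) (at p)"
  proof
    fix p assume p: "p \<in> Phi ` UH"
    have fp: "fT p \<in> UH" using fT p by auto
    show "(fT has_derivative (\<lambda>v. wv v (fT p))) (at p)"
    proof (rule has_derivative_inverse_basic[where g=fT and y=p and f=Phi, OF Phi_deriv[OF fp] w_lin[of "fT p"] w_inv[OF fp] _ openD p])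
      show "continuous (at p) fT" using contf openD p continuous_on_eq_continuous_at by blast
      show "\<And>z. z \<in> Phi ` UH \<Longrightarrow> Phi (fT z) = z" using fT by auto
    qed
  qed
  have sm1: "smooth_on (Phi ` UH) fT"
    by (rule smooth_comp_mc[OF openD open_UH _ _ gd mc_id]) (use fT w_mc in auto)
  have sm2: "smooth_on UH (inv_into (Phi ` UH) fT)"
  proof (rule smooth_mc_pair[OF open_UH mc_q1 mc_q2])
    show "\<forall>z\<in>UH. inv_into (Phi ` UH) fT z = (Re (q1 z), Re (q2 z))"
    proof
      fix z assume z: "z \<in> UH"
      have "inv_into (Phi ` UH) fT z = Phi z"
        by (rule inv_into_f_eq[OF injf]) (use z fPhi in auto)
      then show "inv_into (Phi ` UH) fT z = (Re (q1 z), Re (q2 z))" by (simp add: Phi_def)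
    qed
  qed
  show ?thesis unfolding diffeomorphism_on_def using openD open_UH bij sm1 sm2 by blast
qed

end



theorem mainTheorem8:
  fixes ap am bp bm :: "nat \<Rightarrow> nat \<Rightarrow> real" and gp gm :: "nat \<Rightarrow> real"
    and Ap Am Bp Bm :: "real measure" and Gp Gm :: real
    and F :: "complex \<Rightarrow> complex"
    and root_eq :: "real \<Rightarrow> real \<Rightarrow> complex \<Rightarrow> bool"
    and D :: "(real \<times> real) set"
  assumes params: "\<forall>N. extreme_char_params (ap N) (am N) (bp N) (bm N) (gp N) (gm N)"
    and bdd: "\<exists>C. \<forall>N i. ap N i \<le> C \<and> am N i \<le> C"
    and meas: "fin_cpt_measure Ap" "fin_cpt_measure Am" "fin_cpt_measure Bp" "fin_cpt_measure Bm"
    and conv: "empirical_weak_conv ap Ap" "empirical_weak_conv am Am"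
              "empirical_weak_conv bp Bp" "empirical_weak_conv bm Bm"
    and gconv: "((\<lambda>N. gp N / real N) \<longlongrightarrow> Gp) sequentially"
               "((\<lambda>N. gm N / real N) \<longlongrightarrow> Gm) sequentially"
    and Gpos: "Gp > 0" "Gm > 0"
    and F_def: "F = F_shift Ap Am Bp Bm Gp Gm"
    and root_eq_def: "root_eq = (\<lambda>y \<eta> z. 1 / z + 1 + (1 + z) * F z / complex_of_real \<eta>
                                            = complex_of_real y / complex_of_real \<eta>)"
    and D_def: "D = {(y, \<eta>). \<eta> > 0 \<and> (\<exists>z. Im z > 0 \<and> root_eq y \<eta> z)}"
  shows "(\<forall>y \<eta>. \<eta> > 0 \<longrightarrow>
            (\<forall>z1 z2. Im z1 > 0 \<and> Im z2 > 0 \<and> root_eq y \<eta> z1 \<and> root_eq y \<eta> z2 \<longrightarrow> z1 = z2))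
       \<and> diffeomorphism_on D {z. Im z > 0} (\<lambda>(y, \<eta>). THE z. Im z > 0 \<and> root_eq y \<eta> z)"
proof -
  obtain C where C: "\<forall>N i. ap N i \<le> C \<and> am N i \<le> C" using bdd by blast
  have fm: "sets M = sets borel \<and> finite_measure M" if "fin_cpt_measure M" for M
    using that unfolding fin_cpt_measure_def by blast
  have sAp: "sets Ap = sets borel" "finite_measure Ap" using fm[OF meas(1)] by auto
  have sAm: "sets Am = sets borel" "finite_measure Am" using fm[OF meas(2)] by auto
  have sBp: "sets Bp = sets borel" "finite_measure Bp" using fm[OF meas(3)] by auto
  have sBm: "sets Bm = sets borel" "finite_measure Bm" using fm[OF meas(4)] by auto
  have decr: "f i \<le> f 0" if "\<forall>i. f i \<ge> f (Suc i)" for f :: "nat \<Rightarrow> real" and i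
  proof (induction i)
    case (Suc i) then show ?case using that order_trans by blast
  qed simp
  have bp1: "bp N i \<le> 1" for N i
  proof -
    have e: "extreme_char_params (ap N) (am N) (bp N) (bm N) (gp N) (gm N)" using params by blast
    have "bp N i \<le> bp N 0" by (rule decr) (use e in \<open>auto simp: extreme_char_params_def\<close>)
    moreover have "bp N 0 + bm N 0 \<le> 1" "bm N 0 \<ge> 0" using e by (auto simp: extreme_char_params_def)
    ultimately show ?thesis by linarith
  qed
  have bm1: "bm N i \<le> 1" for N i
  proof -
    have e: "extreme_char_params (ap N) (am N) (bp N) (bm N) (gp N) (gm N)" using params by blast
    have "bm N i \<le> bm N 0" by (rule decr) (use e in \<open>auto simp: extreme_char_params_def\<close>)
    moreover have "bp N 0 + bm N 0 \<le> 1" "bp N 0 \<ge> 0" using e by (auto simp: extreme_char_params_def)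
    ultimately show ?thesis by linarith
  qed
  have suppAp: "AE x in Ap. 0 \<le> x \<and> x \<le> C" by (rule emp_support[OF conv(1) sAp]) (use C in auto)
  have suppAm: "AE x in Am. 0 \<le> x \<and> x \<le> C" by (rule emp_support[OF conv(2) sAm]) (use C in auto)
  have suppBp: "AE x in Bp. 0 \<le> x \<and> x \<le> 1" by (rule emp_support[OF conv(3) sBp]) (use bp1 in auto)
  have suppBm: "AE x in Bm. 0 \<le> x \<and> x \<le> 1" by (rule emp_support[OF conv(4) sBm]) (use bm1 in auto)
  interpret M: mainloc Ap Am Bp Bm Gp Gm C
    by (rule mainloc.intro) (use sAp sAm sBp sBm suppAp suppAm suppBp suppBm Gpos in auto)
  have root: "root_eq y eta z \<longleftrightarrow> M.Phi z = (y, eta)" if "Im z > 0" "eta > 0" for y eta z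
    unfolding root_eq_def F_def using M.root_iff[OF that] by simp
  have uniq: "\<forall>y eta. eta > 0 \<longrightarrow>
            (\<forall>z1 z2. Im z1 > 0 \<and> Im z2 > 0 \<and> root_eq y eta z1 \<and> root_eq y eta z2 \<longrightarrow> z1 = z2)"
  proof (intro allI impI)
    fix y eta z1 z2 assume eta: "eta > 0" and h: "Im z1 > 0 \<and> Im z2 > 0 \<and> root_eq y eta z1 \<and> root_eq y eta z2"
    then have "M.Phi z1 = M.Phi z2" using root eta by auto
    then show "z1 = z2" using M.Phi_inj h by (auto simp: UH_def inj_on_def)
  qed
  have Deq: "D = M.Phi ` UH"
  proof
    show "D \<subseteq> M.Phi ` UH"
    proof
      fix p assume "p \<in> D"
      then obtain y eta z where p: "p = (y, eta)" "eta > 0" "Im z > 0" "root_eq y eta z"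
        unfolding D_def by auto
      then have "M.Phi z = p" using root by auto
      moreover have "z \<in> UH" using p by (simp add: UH_def)
      ultimately show "p \<in> M.Phi ` UH" by blast
    qed
    show "M.Phi ` UH \<subseteq> D"
    proof
      fix p assume "p \<in> M.Phi ` UH"
      then obtain z where z: "z \<in> UH" "p = M.Phi z" by blast
      have zi: "Im z > 0" using z by (simp add: UH_def)
      obtain y eta where ye: "M.Phi z = (y, eta)" by (cases "M.Phi z")
      have "eta = M.Et z" using ye unfolding M.Phi_def M.q2_def by simp
      then have eta: "eta > 0" using M.Et_pos[OF zi] by simp
      then have "root_eq y eta z" using root[OF zi eta] ye by simp
      then show "p \<in> D" unfolding D_def using z zi eta ye by auto
    qed
  qed
  have fT: "\<forall>p\<in>M.Phi ` UH. (\<lambda>(y, eta). THE z. Im z > 0 \<and> root_eq y eta z) p \<in> UH \<and>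
              M.Phi ((\<lambda>(y, eta). THE z. Im z > 0 \<and> root_eq y eta z) p) = p"
  proof
    fix p assume "p \<in> M.Phi ` UH"
    then obtain z where z: "z \<in> UH" "p = M.Phi z" by blast
    have zi: "Im z > 0" using z by (simp add: UH_def)
    obtain y eta where ye: "M.Phi z = (y, eta)" by (cases "M.Phi z")
    have "eta = M.Et z" using ye unfolding M.Phi_def M.q2_def by simp
    then have eta: "eta > 0" using M.Et_pos[OF zi] by simp
    have rz: "root_eq y eta z" using root[OF zi eta] ye by simp
    have th: "(THE z. Im z > 0 \<and> root_eq y eta z) = z"
      by (rule the_equality) (use zi rz uniq eta in blast)+
    show "(\<lambda>(y, eta). THE z. Im z > 0 \<and> root_eq y eta z) p \<in> UH \<and>
              M.Phi ((\<lambda>(y, eta). THE z. Im z > 0 \<and> root_eq y eta z) p) = p"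
      using th z ye by simp
  qed
  have "diffeomorphism_on (M.Phi ` UH) UH (\<lambda>(y, eta). THE z. Im z > 0 \<and> root_eq y eta z)"
    by (rule M.final[OF fT])
  then have "diffeomorphism_on D {z. Im z > 0} (\<lambda>(y, \<eta>). THE z. Im z > 0 \<and> root_eq y \<eta> z)"
    unfolding Deq UH_def .
  with uniq show ?thesis by blast
qed


end
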